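(* Let $X=(u_1,u_2)$ be the mild solution of the stochastic wave equation on $\mathbb{S}^2$ with deterministic initial values $(v_1,v_2)$ (as defined in the context). Assume there exist $\ell_0\in\mathbb{N}$, $\alpha>2$ and $C>0$ with $A_\ell\le C\ell^{-\alpha}$ for all $\ell>\ell_0$. Then: (i) for all $t\in[0,T]$, $m\in\mathbb{N}$ and $s<\alpha/2$ with $v_1\in H^s(\mathbb{S}^2)$ and $v_2\in H^{s-1}(\mathbb{S}^2)$, one has $u_1(t)\in L^{2m}(\Omega;H^s(\mathbb{S}^2))$, i.e. there exists a constant $M$ such that $\|u_1(t)\|_{L^{2m}(\Omega;H^s(\mathbb{S}^2))}\le M(1+\|v_1\|_{H^s(\mathbb{S}^2)}+\|v_2\|_{H^{s-1}(\mathbb{S}^2)})<\infty$; (ii) for all $t\in[0,T]$, $m\in\mathbb{N}$ and $s<\alpha/2-1$ with $v_1\in H^{s+1}(\mathbb{S}^2)$ and $v_2\in H^{s}(\mathbb{S}^2)$, one has $u_2(t)\in L^{2m}(\Omega;H^s(\mathbb{S}^2))$, i.e. there exists a constant $M$ such that $\|u_2(t)\|_{L^{2m}(\Omega;H^s(\mathbb{S}^2))}\le M(1+\|v_1\|_{H^{s+1}(\mathbb{S}^2)}+\|v_2\|_{H^{s}(\mathbb{S}^2)})<\infty$.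
   Context: $\mathbb{S}^2$ is the unit sphere in $\mathbb{R}^3$, $L^2(\mathbb{S}^2)$ the real square-integrable functions, $(Y_{\ell,m},\ \ell\in\mathbb{N}_0,\ |m|\le\ell)$ the standard complex spherical harmonics (orthonormal basis, $Y_{\ell,-m}=(-1)^m\overline{Y_{\ell,m}}$, $\Delta_{\mathbb{S}^2}Y_{\ell,m}=-\ell(\ell+1)Y_{\ell,m}$). For $s\in\mathbb{R}$, $H^s(\mathbb{S}^2)=(\mathrm{Id}-\Delta_{\mathbb{S}^2})^{-s/2}L^2(\mathbb{S}^2)$ with norm $\|f\|_{H^s}=\|(\mathrm{Id}-\Delta_{\mathbb{S}^2})^{s/2}f\|_{L^2}$, i.e. $\|f\|_{H^s}^2=\sum_{\ell,m}(1+\ell(\ell+1))^s|f^{\ell,m}|^2$ with $f^{\ell,m}=(f,Y_{\ell,m})$. $\|Z\|_{L^p(\Omega;H^s)}=\mathbb{E}[\|Z\|_{H^s}^p]^{1/p}$. The noise: $W(t)=\sum_{\ell}\big(\sqrt{A_\ell}\beta_1^{\ell,0}(t)Y_{\ell,0}+\sqrt{2A_\ell}\sum_{m=1}^\ell(\beta_1^{\ell,m}(t)\Re Y_{\ell,m}+\beta_2^{\ell,m}(t)\Im Y_{\ell,m})\big)$, $t\in[0,T]$, with independent real standard Brownian motions $\beta_i^{\ell,m}$ ($\beta_2^{\ell,0}=0$) and angular power spectrum $A_\ell\ge0$; $a^{\ell,m}(t)=(W(t),Y_{\ell,m})$. The stochastic wave equation is $\partial_{tt}u-\Delta_{\mathbb{S}^2}u=\dot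 W$, $u(0)=v_1$, $\partial_tu(0)=v_2$, with $v_1,v_2$ deterministic; its mild solution $X=(u_1,u_2)$, $u_2=\partial_tu_1$, is $u_j(t)=\sum_{\ell,m}u_j^{\ell,m}(t)Y_{\ell,m}$ where, with $\lambda_\ell=\ell(\ell+1)$ and $v_j^{\ell,m}=(v_j,Y_{\ell,m})$: for $\ell\ge1$, $u_1^{\ell,m}(t)=\cos(t\lambda_\ell^{1/2})v_1^{\ell,m}+\lambda_\ell^{-1/2}\sin(t\lambda_\ell^{1/2})v_2^{\ell,m}+\int_0^t\lambda_\ell^{-1/2}\sin((t-s)\lambda_\ell^{1/2})\,\mathrm{d}a^{\ell,m}(s)$ and $u_2^{\ell,m}(t)=-\lambda_\ell^{1/2}\sin(t\lambda_\ell^{1/2})v_1^{\ell,m}+\cos(t\lambda_\ell^{1/2})v_2^{\ell,m}+\int_0^t\cos((t-s)\lambda_\ell^{1/2})\,\mathrm{d}a^{\ell,m}(s)$; for $\ell=0$, $u_1^{0,0}(t)=v_1^{0,0}+tv_2^{0,0}+\int_0^ta^{0,0}(s)\,\mathrm{d}s$ and $u_2^{0,0}(t)=v_2^{0,0}+a^{0,0}(t)$. *)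

theory Defs
  imports "HOL-Probability.Probability"
begin

text \<open>Elements of L2(S2) / H^s(S2) (real-valued functions or distributions on the sphere)
  are represented by their spherical harmonic coefficients f l m = (f, Y_{l,m}),
  with l :: nat and m :: int, |m| <= l.\<close>

definition lam :: "nat \<Rightarrow> real" where
  "lam l = real l * (real l + 1)"

text \<open>Coefficient families of real-valued functions: supported on |m| <= l and
  satisfying f^{l,-m} = (-1)^m conj(f^{l,m}).\<close>
definition real_sph_coeffs :: "(nat \<Rightarrow> int \<Rightarrow> complex) \<Rightarrow> bool" where
  "real_sph_coeffs f \<longleftrightarrow>
     (\<forall>l m. int l < \<bar>m\<bar> \<longrightarrow> f l m = 0) \<and>
     (\<forall>l m. f l (- m) = (-1) ^ nat \<bar>m\<bar> * cnj (f l m))"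

text \<open>Squared Sobolev norm ||f||_{H^s}^2 = sum_{l,m} (1 + l(l+1))^s |f^{l,m}|^2,
  taken in ennreal (value infinity means f is not in H^s).\<close>
definition hs_sq :: "real \<Rightarrow> (nat \<Rightarrow> int \<Rightarrow> complex) \<Rightarrow> ennreal" where
  "hs_sq s f = (\<Sum>l. \<Sum>m\<in>{- int l..int l}. ennreal ((1 + lam l) powr s * (cmod (f l m))\<^sup>2))"

definition hs_norm :: "real \<Rightarrow> (nat \<Rightarrow> int \<Rightarrow> complex) \<Rightarrow> real" where
  "hs_norm s f = sqrt (enn2real (hs_sq s f))"

definition std_BM :: "'a measure \<Rightarrow> real \<Rightarrow> (real \<Rightarrow> 'a \<Rightarrow> real) \<Rightarrow> bool" where
  "std_BM M T B \<longleftrightarrow>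
     (\<forall>\<omega>\<in>space M. B 0 \<omega> = 0 \<and> continuous_on {0..T} (\<lambda>t. B t \<omega>)) \<and>
     (\<forall>s t. 0 \<le> s \<and> s < t \<and> t \<le> T \<longrightarrow>
        distributed M lborel (\<lambda>\<omega>. B t \<omega> - B s \<omega>)
          (\<lambda>x. ennreal (normal_density 0 (sqrt (t - s)) x))) \<and>
     (\<forall>(n::nat) (\<tau>::nat \<Rightarrow> real). 0 \<le> \<tau> 0 \<and> \<tau> n \<le> T \<and> (\<forall>i<n. \<tau> i \<le> \<tau> (Suc i)) \<longrightarrow>
        prob_space.indep_vars M (\<lambda>_. borel) (\<lambda>i \<omega>. B (\<tau> (Suc i)) \<omega> - B (\<tau> i) \<omega>) {..<n})"

text \<open>Index set of the Brownian motions beta_i^{l,m}: i = 1 with 0 <= m <= l,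
  i = 2 with 1 <= m <= l (beta_2^{l,0} = 0 does not enter).\<close>
definition bm_index :: "(nat \<times> nat \<times> nat) set" where
  "bm_index = {(i, l, m). (i = 1 \<and> m \<le> l) \<or> (i = 2 \<and> 1 \<le> m \<and> m \<le> l)}"

definition noise_family :: "'a measure \<Rightarrow> real \<Rightarrow> (nat \<times> nat \<times> nat \<Rightarrow> real \<Rightarrow> 'a \<Rightarrow> real) \<Rightarrow> bool" where
  "noise_family M T \<beta> \<longleftrightarrow>
     (\<forall>k\<in>bm_index. std_BM M T (\<beta> k)) \<and>
     prob_space.indep_vars M (\<lambda>_. PiM {0..T} (\<lambda>_. (borel :: real measure)))
        (\<lambda>k \<omega>. restrict (\<lambda>t. \<beta> k t \<omega>) {0..T}) bm_index"

text \<open>a^{l,m}(t) = (W(t), Y_{l,m}), computed from the expansion of W using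
  Re Y_{l,m} = (Y_{l,m} + (-1)^m Y_{l,-m})/2, Im Y_{l,m} = (Y_{l,m} - (-1)^m Y_{l,-m})/(2i),
  and (f,g) = integral of f * conj g.\<close>
definition noise_coeff :: "(nat \<Rightarrow> real) \<Rightarrow> (nat \<times> nat \<times> nat \<Rightarrow> real \<Rightarrow> 'a \<Rightarrow> real)
    \<Rightarrow> nat \<Rightarrow> int \<Rightarrow> real \<Rightarrow> 'a \<Rightarrow> complex" where
  "noise_coeff A \<beta> l m t \<omega> =
     (if m = 0 then complex_of_real (sqrt (A l) * \<beta> (1, l, 0) t \<omega>)
      else if 0 < m then complex_of_real (sqrt (A l / 2))
             * Complex (\<beta> (1, l, nat m) t \<omega>) (- \<beta> (2, l, nat m) t \<omega>)
      else complex_of_real ((-1) ^ nat (- m) * sqrt (A l / 2))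
             * Complex (\<beta> (1, l, nat (- m)) t \<omega>) (\<beta> (2, l, nat (- m)) t \<omega>))"

text \<open>Stochastic (Wiener) integral int_0^t f(r) dX(r) of a deterministic C^1 integrand f
  against a continuous path X, defined pathwise as the Riemann-Stieltjes integral,
  i.e. via integration by parts.\<close>
definition det_stoch_int :: "(real \<Rightarrow> real) \<Rightarrow> (real \<Rightarrow> complex) \<Rightarrow> real \<Rightarrow> complex" where
  "det_stoch_int f X t =
     complex_of_real (f t) * X t - complex_of_real (f 0) * X 0
     - integral {0..t} (\<lambda>r. complex_of_real (deriv f r) * X r)"

definition sol_u1 :: "(nat \<Rightarrow> real) \<Rightarrow> (nat \<times> nat \<times> nat \<Rightarrow> real \<Rightarrow> 'a \<Rightarrow> real)
    \<Rightarrow> (nat \<Rightarrow> int \<Rightarrow> complex) \<Rightarrow> (nat \<Rightarrow> int \<Rightarrow> complex) \<Rightarrow> real \<Rightarrow> 'a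
    \<Rightarrow> nat \<Rightarrow> int \<Rightarrow> complex" where
  "sol_u1 A \<beta> v1 v2 t \<omega> l m =
     (if int l < \<bar>m\<bar> then 0
      else if l = 0 then
        v1 0 0 + complex_of_real t * v2 0 0 + integral {0..t} (\<lambda>r. noise_coeff A \<beta> 0 0 r \<omega>)
      else
        complex_of_real (cos (t * sqrt (lam l))) * v1 l m
        + complex_of_real (sin (t * sqrt (lam l)) / sqrt (lam l)) * v2 l m
        + det_stoch_int (\<lambda>r. sin ((t - r) * sqrt (lam l)) / sqrt (lam l))
            (\<lambda>r. noise_coeff A \<beta> l m r \<omega>) t)"

definition sol_u2 :: "(nat \<Rightarrow> real) \<Rightarrow> (nat \<times> nat \<times> nat \<Rightarrow> real \<Rightarrow> 'a \<Rightarrow> real)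
    \<Rightarrow> (nat \<Rightarrow> int \<Rightarrow> complex) \<Rightarrow> (nat \<Rightarrow> int \<Rightarrow> complex) \<Rightarrow> real \<Rightarrow> 'a
    \<Rightarrow> nat \<Rightarrow> int \<Rightarrow> complex" where
  "sol_u2 A \<beta> v1 v2 t \<omega> l m =
     (if int l < \<bar>m\<bar> then 0
      else if l = 0 then v2 0 0 + noise_coeff A \<beta> 0 0 t \<omega>
      else
        complex_of_real (- sqrt (lam l) * sin (t * sqrt (lam l))) * v1 l m
        + complex_of_real (cos (t * sqrt (lam l))) * v2 l m
        + det_stoch_int (\<lambda>r. cos ((t - r) * sqrt (lam l)))
            (\<lambda>r. noise_coeff A \<beta> l m r \<omega>) t)"

end

theory Submission
  imports Defs
begin

lemma rs_uniform:
  fixes h :: "real \<Rightarrow> real"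
  assumes hc: "continuous_on {0..t} h" and t: "0 < t" and e: "0 < e"
  shows "\<exists>N. \<forall>n\<ge>N. \<forall>j\<le>n. \<bar>integral {real j * t / real n..t} h
            - (\<Sum>i\<in>{Suc j..n}. h (real i * t / real n) * (t / real n))\<bar> \<le> e"
proof -
  have uc: "uniformly_continuous_on {0..t} h"
    using compact_uniformly_continuous[OF hc] by simp
  have et: "0 < e / t" using e t by simp
  obtain d where d: "d > 0" and dd: "\<And>x x'. x \<in> {0..t} \<Longrightarrow> x' \<in> {0..t} \<Longrightarrow> dist x' x < d \<Longrightarrow> dist (h x') (h x) < e / t"
    using uc[unfolded uniformly_continuous_on_def, rule_format, OF et] by blast
  obtain N :: nat where N: "t / d < real N" using reals_Archimedean2 by blast
  have "0 < t / d" using t d by simp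
  then have "0 < real N" using N by linarith
  then have Npos: "0 < N" by simp
  show ?thesis
  proof (intro exI allI impI)
    fix n j :: nat assume nN: "N \<le> n" and jn: "j \<le> n"
    have npos: "0 < n" using nN Npos by simp
    define D where "D = t / real n"
    define r where "r i = real i * t / real n" for i :: nat
    have Dpos: "0 < D" using t npos by (simp add: D_def)
    have Dd: "D < d"
    proof -
      have "real N \<le> real n" using nN by simp
      then have "t / d < real n" using N by linarith
      then have "t < real n * d" using d by (simp add: divide_less_eq)
      then show ?thesis using npos by (simp add: D_def divide_less_eq mult.commute)
    qed
    have rs: "r (Suc i) = r i + D" for i by (simp add: r_def D_def add_divide_distrib algebra_simps)
    have r0: "0 \<le> r i" for i using t by (simp add: r_def)
    have rn: "r i \<le> t" if "i \<le> n" for i using that t npos by (simp add: r_def field_simps)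
    have rnn: "r n = t" using npos by (simp add: r_def)
    have key: "\<forall>j. j + q = n \<longrightarrow> \<bar>integral {r j..t} h - (\<Sum>i\<in>{Suc j..n}. h (r i) * D)\<bar> \<le> real q * D * (e / t)" for q
    proof (induction q)
      case 0 then show ?case using rnn by auto
    next
      case (Suc q)
      show ?case
      proof (intro allI impI)
        fix j assume jq: "j + Suc q = n"
        have IH: "\<bar>integral {r (Suc j)..t} h - (\<Sum>i\<in>{Suc (Suc j)..n}. h (r i) * D)\<bar> \<le> real q * D * (e / t)"
          using Suc.IH jq by auto
        have a1: "r j \<le> r (Suc j)" using rs Dpos by (simp add: less_eq_real_def)
        have a2: "r (Suc j) \<le> t" using rn jq by simp
        have sub: "{r j..t} \<subseteq> {0..t}" using r0 by auto
        have int: "h integrable_on {r j..t}"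
          using integrable_continuous_interval continuous_on_subset[OF hc sub] by blast
        have comb: "integral {r j..r (Suc j)} h + integral {r (Suc j)..t} h = integral {r j..t} h"
          by (rule Henstock_Kurzweil_Integration.integral_combine[OF a1 a2 int])
        have sumeq: "(\<Sum>i\<in>{Suc j..n}. h (r i) * D) = h (r (Suc j)) * D + (\<Sum>i\<in>{Suc (Suc j)..n}. h (r i) * D)"
          using jq by (subst sum.atLeast_Suc_atMost) auto
        have sub2: "{r j..r (Suc j)} \<subseteq> {0..t}" using r0 a2 by auto
        have int2: "h integrable_on {r j..r (Suc j)}"
          using integrable_continuous_interval continuous_on_subset[OF hc sub2] by blast
        have hi: "((\<lambda>x. h x - h (r (Suc j))) has_integral (integral {r j..r (Suc j)} h - h (r (Suc j)) * D)) {r j..r (Suc j)}"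
        proof -
          have "((\<lambda>x. h (r (Suc j))) has_integral (h (r (Suc j)) * D)) {r j..r (Suc j)}"
            using has_integral_const_real[of "h (r (Suc j))" "r j" "r (Suc j)"] a1 rs by (simp add: mult.commute)
          then show ?thesis using has_integral_diff[OF integrable_integral[OF int2]] by blast
        qed
        have b1: "\<bar>integral {r j..r (Suc j)} h - h (r (Suc j)) * D\<bar> \<le> (e / t) * Henstock_Kurzweil_Integration.content {r j..r (Suc j)}"
        proof -
          have "norm (integral {r j..r (Suc j)} h - h (r (Suc j)) * D) \<le> (e / t) * Henstock_Kurzweil_Integration.content {r j..r (Suc j)}"
          proof (rule has_integral_bound_real[where S="{}", OF _ _ hi])
            show "0 \<le> e / t" using e t by simp
            fix x assume x: "x \<in> {r j..r (Suc j)} - {}"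
            have "dist x (r (Suc j)) < d" using x rs Dd by (auto simp: dist_real_def)
            then have "dist (h x) (h (r (Suc j))) < e / t"
              using dd[of "r (Suc j)" x] x sub2 by auto
            then show "norm (h x - h (r (Suc j))) \<le> e / t" by (simp add: dist_real_def)
          qed auto
          then show ?thesis by simp
        qed
        have "Henstock_Kurzweil_Integration.content {r j..r (Suc j)} = D" using a1 rs by simp
        then show "\<bar>integral {r j..t} h - (\<Sum>i\<in>{Suc j..n}. h (r i) * D)\<bar> \<le> real (Suc q) * D * (e / t)"
          using b1 IH comb sumeq by (simp add: algebra_simps)
      qed
    qed
    have "\<bar>integral {r j..t} h - (\<Sum>i\<in>{Suc j..n}. h (r i) * D)\<bar> \<le> real (n - j) * D * (e / t)"
      using key[of "n - j"] jn by auto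
    also have "\<dots> \<le> real n * D * (e / t)"
      using Dpos e t by (intro mult_right_mono mult_right_mono) auto
    also have "\<dots> = e" using npos t by (simp add: D_def)
    finally show "\<bar>integral {real j * t / real n..t} h - (\<Sum>i\<in>{Suc j..n}. h (real i * t / real n) * (t / real n))\<bar> \<le> e"
      by (simp add: r_def D_def)
  qed
qed

lemma gauss_moment:
  assumes P: "prob_space M" and fin: "finite J" and ind: "prob_space.indep_vars M (\<lambda>_. borel) X J"
    and dist: "\<And>j. j \<in> J \<Longrightarrow> distributed M lborel (X j) (\<lambda>x. ennreal (normal_density 0 (\<sigma> j) x))"
    and pos: "\<And>j. j \<in> J \<Longrightarrow> 0 < \<sigma> j"
  shows "(\<integral>\<^sup>+\<omega>. ennreal ((\<Sum>j\<in>J. d j * X j \<omega>) ^ (2*k)) \<partial>M)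
           \<le> ennreal (fact (2*k) * (\<Sum>j\<in>J. (d j)\<^sup>2 * (\<sigma> j)\<^sup>2) ^ k)"
proof -
  interpret prob_space M by (rule P)
  define J' where "J' = {j\<in>J. d j \<noteq> 0}"
  have J'J: "J' \<subseteq> J" by (auto simp: J'_def)
  have fin': "finite J'" using fin J'J finite_subset by blast
  have s1: "(\<Sum>j\<in>J. d j * X j \<omega>) = (\<Sum>j\<in>J'. d j * X j \<omega>)" for \<omega>
    by (rule sum.mono_neutral_right[OF fin J'J]) (auto simp: J'_def)
  have s2: "(\<Sum>j\<in>J. (d j)\<^sup>2 * (\<sigma> j)\<^sup>2) = (\<Sum>j\<in>J'. (d j)\<^sup>2 * (\<sigma> j)\<^sup>2)"
    by (rule sum.mono_neutral_right[OF fin J'J]) (auto simp: J'_def)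
  show ?thesis
  proof (cases "J' = {}")
    case True
    show ?thesis
    proof (cases "k = 0")
      case True
      then show ?thesis by (simp add: emeasure_space_1)
    next
      case False
      then show ?thesis using \<open>J' = {}\<close> by (simp add: s1 power_0_left)
    qed
  next
    case False
    define Y where "Y j \<omega> = 0 + d j * X j \<omega>" for j \<omega>
    have indY: "indep_vars (\<lambda>_. borel) Y J'"
    proof -
      have "indep_vars (\<lambda>_. borel) (\<lambda>j \<omega>. (\<lambda>x. 0 + d j * x) (X j \<omega>)) J"
        by (rule indep_vars_compose2[OF ind]) simp
      then show ?thesis unfolding Y_def using indep_vars_subset J'J by blast
    qed
    have distY: "distributed M lborel (Y j) (\<lambda>x. ennreal (normal_density 0 (\<bar>d j\<bar> * \<sigma> j) x))" if "j \<in> J'" for j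
    proof -
      have "j \<in> J" "d j \<noteq> 0" using that by (auto simp: J'_def)
      from normal_density_affine[OF dist[OF \<open>j \<in> J\<close>] pos[OF \<open>j \<in> J\<close>] \<open>d j \<noteq> 0\<close>, of 0]
      show ?thesis by (simp add: Y_def[abs_def])
    qed
    have posY: "0 < \<bar>d j\<bar> * \<sigma> j" if "j \<in> J'" for j
      using that pos by (auto simp: J'_def)
    define s where "s = sqrt (\<Sum>j\<in>J'. (\<bar>d j\<bar> * \<sigma> j)\<^sup>2)"
    have spos: "0 < s" unfolding s_def
    proof (intro real_sqrt_gt_zero sum_pos[OF fin' False])
      fix j assume "j \<in> J'"
      then have "0 < \<bar>d j\<bar> * \<sigma> j" by (rule posY)
      then show "0 < (\<bar>d j\<bar> * \<sigma> j)\<^sup>2" by (metis less_irrefl mult_eq_0_iff zero_less_power2 abs_zero mult_zero_left)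
    qed
    have distS: "distributed M lborel (\<lambda>\<omega>. \<Sum>j\<in>J'. Y j \<omega>) (\<lambda>x. ennreal (normal_density (\<Sum>j\<in>J'. 0) s x))"
      unfolding s_def by (rule sum_indep_normal[OF fin' False indY posY distY])
    have "(\<integral>\<^sup>+\<omega>. ennreal ((\<Sum>j\<in>J. d j * X j \<omega>) ^ (2*k)) \<partial>M)
        = (\<integral>\<^sup>+\<omega>. ennreal ((\<Sum>j\<in>J'. Y j \<omega>) ^ (2*k)) \<partial>M)"
      by (simp add: s1 Y_def)
    also have "\<dots> = (\<integral>\<^sup>+x. ennreal (normal_density 0 s x) * ennreal (x ^ (2*k)) \<partial>lborel)"
      using distributed_nn_integral[OF distS, of "\<lambda>x. ennreal (x ^ (2*k))"] by simp
    also have "\<dots> = (\<integral>\<^sup>+x. ennreal (normal_density 0 s x * (x - 0) ^ (2*k)) \<partial>lborel)"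
      by (intro nn_integral_cong) (simp add: ennreal_mult'[symmetric] power_mult)
    also have "\<dots> = ennreal (fact (2 * k) / ((2 / s\<^sup>2)^k * fact k))"
    proof -
      have hb: "has_bochner_integral lborel (\<lambda>x. normal_density 0 s x * (x - 0) ^ (2 * k)) (fact (2 * k) / ((2 / s\<^sup>2)^k * fact k))"
        by (rule normal_moment_even[OF spos])
      have "(\<integral>\<^sup>+x. ennreal (normal_density 0 s x * (x - 0) ^ (2*k)) \<partial>lborel)
          = ennreal (integral\<^sup>L lborel (\<lambda>x. normal_density 0 s x * (x - 0) ^ (2 * k)))"
        using hb by (intro nn_integral_eq_integral) (auto simp: has_bochner_integral_iff power_mult)
      then show ?thesis using hb by (simp add: has_bochner_integral_iff)
    qed
    also have "\<dots> \<le> ennreal (fact (2*k) * (\<Sum>j\<in>J. (d j)\<^sup>2 * (\<sigma> j)\<^sup>2) ^ k)"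
    proof (rule ennreal_leI)
      have ss: "s\<^sup>2 = (\<Sum>j\<in>J. (d j)\<^sup>2 * (\<sigma> j)\<^sup>2)"
        unfolding s_def s2 by (subst real_sqrt_pow2) (auto intro!: sum_nonneg simp: power_mult_distrib)
      have "fact (2 * k) / ((2 / s\<^sup>2)^k * fact k) = fact (2*k) * (s\<^sup>2)^k / (2^k * fact k)"
        using spos by (simp add: power_divide field_simps)
      also have "\<dots> \<le> fact (2*k) * (s\<^sup>2)^k"
      proof -
        have "1 \<le> (2::real)^k * fact k" by (metis fact_ge_1 one_le_power mult_mono' one_le_numeral mult_1 zero_le_one)
        moreover have "0 \<le> fact (2*k) * (s\<^sup>2)^k" by simp
        ultimately have "fact (2*k) * (s\<^sup>2)^k / (2^k * fact k) \<le> fact (2*k) * (s\<^sup>2)^k / 1"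
          by (intro divide_left_mono) auto
        then show ?thesis by simp
      qed
      finally show "fact (2 * k) / ((2 / s\<^sup>2)^k * fact k) \<le> fact (2*k) * (\<Sum>j\<in>J. (d j)\<^sup>2 * (\<sigma> j)\<^sup>2) ^ k"
        using ss by simp
    qed
    finally show ?thesis .
  qed
qed

lemma sbp_aux:
  fixes a b :: "nat \<Rightarrow> real"
  shows "(\<Sum>j<n. (\<Sum>i\<in>{Suc j..n}. a i) * (b (Suc j) - b j)) = (\<Sum>i\<in>{1..n}. a i * (b i - b 0))"
proof (induction n)
  case 0 then show ?case by simp
next
  case (Suc n)
  have "(\<Sum>j<Suc n. (\<Sum>i\<in>{Suc j..Suc n}. a i) * (b (Suc j) - b j))
      = (\<Sum>j<Suc n. (\<Sum>i\<in>{Suc j..n}. a i) * (b (Suc j) - b j) + a (Suc n) * (b (Suc j) - b j))"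
    by (intro sum.cong refl) (simp add: algebra_simps)
  also have "\<dots> = (\<Sum>j<Suc n. (\<Sum>i\<in>{Suc j..n}. a i) * (b (Suc j) - b j)) + a (Suc n) * (b (Suc n) - b 0)"
    by (simp add: sum.distrib sum_distrib_left[symmetric] sum_lessThan_telescope)
  also have "(\<Sum>j<Suc n. (\<Sum>i\<in>{Suc j..n}. a i) * (b (Suc j) - b j)) = (\<Sum>j<n. (\<Sum>i\<in>{Suc j..n}. a i) * (b (Suc j) - b j))"
    by simp
  finally show ?case using Suc.IH by simp
qed

lemma sbp:
  fixes a b :: "nat \<Rightarrow> real"
  shows "(\<Sum>j<n. (c - (\<Sum>i\<in>{Suc j..n}. a i)) * (b (Suc j) - b j))
       = c * (b n - b 0) - (\<Sum>i\<in>{1..n}. a i * (b i - b 0))"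
proof -
  have "(\<Sum>j<n. (c - (\<Sum>i\<in>{Suc j..n}. a i)) * (b (Suc j) - b j))
      = c * (\<Sum>j<n. (b (Suc j) - b j)) - (\<Sum>j<n. (\<Sum>i\<in>{Suc j..n}. a i) * (b (Suc j) - b j))"
    by (simp only: sum_distrib_left[symmetric] sum_subtractf left_diff_distrib right_diff_distrib[symmetric])
  then show ?thesis by (simp add: sbp_aux sum_lessThan_telescope)
qed

definition rsi :: "(real \<Rightarrow> real) \<Rightarrow> (real \<Rightarrow> 'a \<Rightarrow> real) \<Rightarrow> real \<Rightarrow> 'a \<Rightarrow> real" where
  "rsi f B t \<omega> = f t * B t \<omega> - f 0 * B 0 \<omega> - integral {0..t} (\<lambda>r. deriv f r * B r \<omega>)"

lemma BM_meas:
  assumes BM: "std_BM M T B" and r: "0 \<le> r" "r \<le> T"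
  shows "(\<lambda>\<omega>. B r \<omega>) \<in> borel_measurable M"
proof (cases "r = 0")
  case True
  have "(\<lambda>\<omega>. 0::real) \<in> borel_measurable M" by simp
  then show ?thesis using BM True unfolding std_BM_def
    by (subst measurable_cong[where g="\<lambda>_. 0"]) auto
next
  case False
  have inc: "\<forall>s t. 0 \<le> s \<and> s < t \<and> t \<le> T \<longrightarrow>
        distributed M lborel (\<lambda>\<omega>. B t \<omega> - B s \<omega>) (\<lambda>x. ennreal (normal_density 0 (sqrt (t - s)) x))"
    using BM unfolding std_BM_def by blast
  have "distributed M lborel (\<lambda>\<omega>. B r \<omega> - B 0 \<omega>) (\<lambda>x. ennreal (normal_density 0 (sqrt (r - 0)) x))"
    by (rule inc[rule_format]) (use r False in auto)
  then have m: "(\<lambda>\<omega>. B r \<omega> - B 0 \<omega>) \<in> borel_measurable M"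
    using distributed_measurable by (metis measurable_lborel1)
  show ?thesis
    using BM unfolding std_BM_def by (subst measurable_cong[where g="\<lambda>\<omega>. B r \<omega> - B 0 \<omega>"]) (auto simp: m)
qed

lemma core:
  assumes P: "prob_space M" and BM: "std_BM M T B" and t: "0 < t" and tT: "t \<le> T"
    and fd: "\<And>r. (f has_real_derivative f' r) (at r)" and f'c: "continuous_on UNIV f'"
    and G: "0 < G" and fb: "\<And>r. r \<in> {0..t} \<Longrightarrow> \<bar>f r\<bar> \<le> G"
  shows "(\<lambda>\<omega>. rsi f B t \<omega>) \<in> borel_measurable M
     \<and> (\<integral>\<^sup>+\<omega>. ennreal ((rsi f B t \<omega>) ^ (2*k)) \<partial>M) \<le> ennreal (fact (2*k) * (4 * t * G\<^sup>2) ^ k)"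
proof -
  interpret prob_space M by (rule P)
  have df: "deriv f r = f' r" for r using fd by (rule DERIV_imp_deriv)
  have B0: "B 0 \<omega> = 0" if "\<omega> \<in> space M" for \<omega> using BM that unfolding std_BM_def by auto
  have Bc: "continuous_on {0..t} (\<lambda>r. B r \<omega>)" if "\<omega> \<in> space M" for \<omega>
    using BM that tT unfolding std_BM_def by (auto intro: continuous_on_subset)
  define rr where "rr n i = real i * t / real n" for n i :: nat
  define d where "d n j = f t - (\<Sum>i\<in>{Suc j..n}. f' (rr n i) * (t / real n))" for n j :: nat
  define S where "S n \<omega> = (\<Sum>j<n. d n j * (B (rr n (Suc j)) \<omega> - B (rr n j) \<omega>))" for n \<omega>
  have rr0: "0 \<le> rr n i" for n i using t by (simp add: rr_def)
  have rrt: "rr n i \<le> t" if "i \<le> n" for n i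
  proof (cases "n = 0")
    case True then show ?thesis using t by (simp add: rr_def)
  next
    case False
    have "real i * t \<le> real n * t" using that t by (intro mult_right_mono) auto
    then show ?thesis using False by (simp add: rr_def pos_divide_le_eq mult.commute)
  qed
  have Smeas: "S n \<in> borel_measurable M" for n
  proof -
    have "(\<lambda>\<omega>. d n j * (B (rr n (Suc j)) \<omega> - B (rr n j) \<omega>)) \<in> borel_measurable M" if "j \<in> {..<n}" for j
    proof -
      have "j \<le> n" "Suc j \<le> n" using that by auto
      then have "(\<lambda>\<omega>. B (rr n (Suc j)) \<omega>) \<in> borel_measurable M" "(\<lambda>\<omega>. B (rr n j) \<omega>) \<in> borel_measurable M"
        using BM_meas[OF BM] rr0 rrt tT by (meson order_trans)+
      then show ?thesis by (intro borel_measurable_times borel_measurable_diff borel_measurable_const)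
    qed
    then show ?thesis unfolding S_def[abs_def] by (rule borel_measurable_sum)
  qed
  have lim: "(\<lambda>n. S n \<omega>) \<longlonglongrightarrow> rsi f B t \<omega>" if \<omega>: "\<omega> \<in> space M" for \<omega>
  proof -
    have hc: "continuous_on {0..t} (\<lambda>r. f' r * B r \<omega>)"
      using continuous_on_mult[OF continuous_on_subset[OF f'c] Bc[OF \<omega>]] by simp
    have Seq: "S n \<omega> = f t * B t \<omega> - (\<Sum>i\<in>{1..n}. f' (rr n i) * B (rr n i) \<omega> * (t / real n))" if "0 < n" for n
    proof -
      have "S n \<omega> = f t * (B (rr n n) \<omega> - B (rr n 0) \<omega>) - (\<Sum>i\<in>{1..n}. (f' (rr n i) * (t / real n)) * (B (rr n i) \<omega> - B (rr n 0) \<omega>))"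
        unfolding S_def d_def using sbp[where n=n and c="f t" and a="\<lambda>i. f' (rr n i) * (t / real n)" and b="\<lambda>i. B (rr n i) \<omega>"] by simp
      moreover have "rr n n = t" "rr n 0 = 0" using that by (auto simp: rr_def)
      ultimately show ?thesis using B0[OF \<omega>] by (simp add: algebra_simps)
    qed
    show ?thesis
    proof (rule LIMSEQ_I)
      fix e :: real assume e: "0 < e"
      obtain N where N: "\<And>n j. n \<ge> N \<Longrightarrow> j \<le> n \<Longrightarrow> \<bar>integral {real j * t / real n..t} (\<lambda>r. f' r * B r \<omega>)
            - (\<Sum>i\<in>{Suc j..n}. f' (real i * t / real n) * B (real i * t / real n) \<omega> * (t / real n))\<bar> \<le> e / 2"
        using rs_uniform[OF hc t, of "e/2"] e by auto
      show "\<exists>no. \<forall>n\<ge>no. norm (S n \<omega> - rsi f B t \<omega>) < e"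
      proof (intro exI allI impI)
        fix n assume n: "max N 1 \<le> n"
        have "\<bar>integral {0..t} (\<lambda>r. f' r * B r \<omega>) - (\<Sum>i\<in>{1..n}. f' (rr n i) * B (rr n i) \<omega> * (t / real n))\<bar> \<le> e / 2"
          using N[of n 0] n by (simp add: rr_def)
        moreover have "S n \<omega> - rsi f B t \<omega> = integral {0..t} (\<lambda>r. f' r * B r \<omega>) - (\<Sum>i\<in>{1..n}. f' (rr n i) * B (rr n i) \<omega> * (t / real n))"
          using Seq[of n] n B0[OF \<omega>] by (simp add: rsi_def df)
        ultimately show "norm (S n \<omega> - rsi f B t \<omega>) < e" using e by simp
      qed
    qed
  qed
  have meas: "(\<lambda>\<omega>. rsi f B t \<omega>) \<in> borel_measurable M"
    by (rule borel_measurable_LIMSEQ_metric[OF Smeas lim])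
  obtain N where N: "\<And>n j. n \<ge> N \<Longrightarrow> j \<le> n \<Longrightarrow> \<bar>integral {real j * t / real n..t} f'
            - (\<Sum>i\<in>{Suc j..n}. f' (real i * t / real n) * (t / real n))\<bar> \<le> G"
    using rs_uniform[OF continuous_on_subset[OF f'c] t G] by auto
  have dbound: "\<bar>d n j\<bar> \<le> 2 * G" if n: "n \<ge> N" and j: "j \<le> n" for n j
  proof -
    have "(f' has_integral (f t - f (rr n j))) {rr n j..t}"
    proof (rule fundamental_theorem_of_calculus)
      show "rr n j \<le> t" using rrt[OF j] .
      fix x assume "x \<in> {rr n j..t}"
      show "(f has_vector_derivative f' x) (at x within {rr n j..t})"
        by (rule has_real_derivative_iff_has_vector_derivative[THEN iffD1, OF has_field_derivative_at_within[OF fd]])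
    qed
    then have "integral {rr n j..t} f' = f t - f (rr n j)" by (rule integral_unique)
    then have "\<bar>f t - f (rr n j) - (\<Sum>i\<in>{Suc j..n}. f' (rr n i) * (t / real n))\<bar> \<le> G"
      using N[OF n j] by (simp add: rr_def)
    moreover have "\<bar>f (rr n j)\<bar> \<le> G" using fb rr0 rrt[OF j] by auto
    ultimately show ?thesis unfolding d_def by linarith
  qed
  have Sbound: "(\<integral>\<^sup>+\<omega>. ennreal ((S n \<omega>) ^ (2*k)) \<partial>M) \<le> ennreal (fact (2*k) * (4 * t * G\<^sup>2) ^ k)"
    if n: "n \<ge> max N 1" for n
  proof -
    have npos: "0 < n" using n by simp
    define X where "X j \<omega> = B (rr n (Suc j)) \<omega> - B (rr n j) \<omega>" for j \<omega>
    have rrs: "rr n (Suc j) = rr n j + t / real n" for j by (simp add: rr_def add_divide_distrib algebra_simps)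
    have ind: "indep_vars (\<lambda>_. borel) X {..<n}"
    proof -
      have "0 \<le> rr n 0 \<and> rr n n \<le> T \<and> (\<forall>i<n. rr n i \<le> rr n (Suc i))"
        using rr0 rrt[of n n] tT rrs t npos by auto
      then show ?thesis using BM unfolding std_BM_def X_def[abs_def] by blast
    qed
    have dist: "distributed M lborel (X j) (\<lambda>x. ennreal (normal_density 0 (sqrt (t / real n)) x))" if "j \<in> {..<n}" for j
    proof -
      have "0 \<le> rr n j" "rr n j < rr n (Suc j)" "rr n (Suc j) \<le> T"
        using rr0 rrs t npos rrt[of "Suc j" n] that tT by auto
      then have "distributed M lborel (\<lambda>\<omega>. B (rr n (Suc j)) \<omega> - B (rr n j) \<omega>)
          (\<lambda>x. ennreal (normal_density 0 (sqrt (rr n (Suc j) - rr n j)) x))"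
        using BM unfolding std_BM_def by blast
      then show ?thesis using rrs[of j] by (simp add: X_def[abs_def])
    qed
    have "(\<integral>\<^sup>+\<omega>. ennreal ((S n \<omega>) ^ (2*k)) \<partial>M) = (\<integral>\<^sup>+\<omega>. ennreal ((\<Sum>j\<in>{..<n}. d n j * X j \<omega>) ^ (2*k)) \<partial>M)"
      by (simp add: S_def X_def)
    also have "\<dots> \<le> ennreal (fact (2*k) * (\<Sum>j\<in>{..<n}. (d n j)\<^sup>2 * (sqrt (t / real n))\<^sup>2) ^ k)"
      by (rule gauss_moment[OF P _ ind dist]) (use t npos in auto)
    also have "\<dots> \<le> ennreal (fact (2*k) * (4 * t * G\<^sup>2) ^ k)"
    proof (intro ennreal_leI mult_left_mono power_mono)
      have sq: "(sqrt (t / real n))\<^sup>2 = t / real n" using t by simp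
      have "(\<Sum>j\<in>{..<n}. (d n j)\<^sup>2 * (sqrt (t / real n))\<^sup>2) \<le> (\<Sum>j\<in>{..<n}. (2 * G)\<^sup>2 * (t / real n))"
        unfolding sq
      proof (intro sum_mono mult_right_mono)
        fix j assume "j \<in> {..<n}"
        then have "\<bar>d n j\<bar> \<le> 2 * G" using dbound n by auto
        then show "(d n j)\<^sup>2 \<le> (2 * G)\<^sup>2" using power_mono[OF \<open>\<bar>d n j\<bar> \<le> 2 * G\<close> abs_ge_zero, of 2] by simp
      qed (use t in auto)
      also have "\<dots> = 4 * t * G\<^sup>2" using npos by (simp add: power2_eq_square)
      finally show "(\<Sum>j\<in>{..<n}. (d n j)\<^sup>2 * (sqrt (t / real n))\<^sup>2) \<le> 4 * t * G\<^sup>2" .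
    qed (auto intro: sum_nonneg)
    finally show ?thesis .
  qed
  have "(\<integral>\<^sup>+\<omega>. ennreal ((rsi f B t \<omega>) ^ (2*k)) \<partial>M) = (\<integral>\<^sup>+\<omega>. liminf (\<lambda>n. ennreal ((S n \<omega>) ^ (2*k))) \<partial>M)"
  proof (intro nn_integral_cong)
    fix \<omega> assume "\<omega> \<in> space M"
    have "(\<lambda>n. ennreal ((S n \<omega>) ^ (2*k))) \<longlonglongrightarrow> ennreal ((rsi f B t \<omega>) ^ (2*k))"
      by (intro tendsto_ennrealI tendsto_power lim[OF \<open>\<omega> \<in> space M\<close>])
    then show "ennreal ((rsi f B t \<omega>) ^ (2*k)) = liminf (\<lambda>n. ennreal ((S n \<omega>) ^ (2*k)))"
      by (intro sym[OF lim_imp_Liminf]) auto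
  qed
  also have "\<dots> \<le> liminf (\<lambda>n. \<integral>\<^sup>+\<omega>. ennreal ((S n \<omega>) ^ (2*k)) \<partial>M)"
    by (rule nn_integral_liminf) (use Smeas in measurable)
  also have "\<dots> \<le> ennreal (fact (2*k) * (4 * t * G\<^sup>2) ^ k)"
    by (rule Liminf_le[OF sequentially_bot]) (unfold eventually_sequentially, use Sbound in blast)
  finally show ?thesis using meas by simp
qed

lemma convex_pow_nonneg: "convex_on {0::real..} (\<lambda>x. x ^ n)"
proof (cases "even n")
  case True
  then show ?thesis using convex_on_subset[OF convex_power_even[OF True]] by blast
next
  case False
  then show ?thesis using convex_power_odd by blast
qed

lemma jensen_fin:
  fixes Q p :: "'i \<Rightarrow> real"
  assumes fin: "finite F" and p: "\<And>l. l \<in> F \<Longrightarrow> 0 < p l" and Q: "\<And>l. l \<in> F \<Longrightarrow> 0 \<le> Q l"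
    and k: "1 \<le> k"
  shows "(\<Sum>l\<in>F. Q l) ^ k \<le> (\<Sum>l\<in>F. p l) ^ (k - 1) * (\<Sum>l\<in>F. Q l ^ k / p l ^ (k - 1))"
proof (cases "F = {}")
  case True then show ?thesis using k by (simp add: power_0_left)
next
  case False
  define P where "P = (\<Sum>l\<in>F. p l)"
  have Ppos: "0 < P" unfolding P_def using fin False p by (intro sum_pos) auto
  define a where "a l = p l / P" for l
  define y where "y l = Q l * P / p l" for l
  have a1: "(\<Sum>l\<in>F. a l) = 1" unfolding a_def P_def using Ppos[unfolded P_def]
    by (simp add: sum_divide_distrib[symmetric])
  have ay: "a l *\<^sub>R y l = Q l" if "l \<in> F" for l using p[OF that] Ppos by (simp add: a_def y_def)
  have J: "(\<lambda>x. x ^ k) (\<Sum>l\<in>F. a l *\<^sub>R y l) \<le> (\<Sum>l\<in>F. a l * (\<lambda>x. x ^ k) (y l))"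
    by (rule convex_on_sum[OF fin False convex_pow_nonneg a1])
       (use p[THEN less_imp_le] Q Ppos[THEN less_imp_le] in \<open>auto simp: a_def y_def intro!: divide_nonneg_nonneg mult_nonneg_nonneg\<close>)
  have "(\<Sum>l\<in>F. a l *\<^sub>R y l) = (\<Sum>l\<in>F. Q l)" using ay by (intro sum.cong) auto
  moreover have "a l * (y l) ^ k = P ^ (k - 1) * (Q l ^ k / p l ^ (k - 1))" if "l \<in> F" for l
  proof -
    obtain k' where kk: "k = Suc k'" using k by (cases k) auto
    show ?thesis using p[OF that] Ppos unfolding kk a_def y_def
      by (simp add: power_mult_distrib power_divide field_simps)
  qed
  ultimately have "(\<Sum>l\<in>F. Q l) ^ k \<le> (\<Sum>l\<in>F. P ^ (k - 1) * (Q l ^ k / p l ^ (k - 1)))"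
    using J by (metis (no_types, lifting) sum.cong)
  then show ?thesis by (simp add: P_def sum_distrib_left)
qed

lemma tendsto_power_ennreal:
  fixes u :: "nat \<Rightarrow> ennreal"
  assumes "u \<longlonglongrightarrow> L"
  shows "(\<lambda>n. u n ^ k) \<longlonglongrightarrow> L ^ k"
proof (induction k)
  case 0 then show ?case by simp
next
  case (Suc k)
  have "(\<lambda>n. u n * u n ^ k) \<longlonglongrightarrow> L * L ^ k"
  proof (rule tendsto_mult_ennreal[OF assms Suc.IH])
    show "\<not> (L = 0 \<and> L ^ k = \<infinity> \<or> L = \<infinity> \<and> L ^ k = 0)"
      by (auto simp: power_eq_top_ennreal top_power_ennreal)
  qed
  then show ?case by simp
qed

lemma JI_point:
  fixes Q b :: "nat \<Rightarrow> real"
  assumes Q: "\<And>l. 0 \<le> Q l" and b: "\<And>l. 0 < b l" and sb: "summable b" and k: "1 \<le> k"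
  shows "(\<Sum>l. ennreal (Q l)) ^ k \<le> ennreal (suminf b ^ (k - 1)) * (\<Sum>l. ennreal (Q l ^ k / b l ^ (k - 1)))"
proof -
  let ?R = "ennreal (suminf b ^ (k - 1)) * (\<Sum>l. ennreal (Q l ^ k / b l ^ (k - 1)))"
  have lim: "(\<lambda>n. (\<Sum>l<n. ennreal (Q l)) ^ k) \<longlonglongrightarrow> (\<Sum>l. ennreal (Q l)) ^ k"
    by (intro tendsto_power_ennreal summable_LIMSEQ summableI)
  have "(\<Sum>l<n. ennreal (Q l)) ^ k \<le> ?R" for n
  proof -
    have "(\<Sum>l<n. ennreal (Q l)) ^ k = ennreal ((\<Sum>l<n. Q l) ^ k)"
      using Q by (simp add: sum_nonneg ennreal_power sum_ennreal)
    also have "\<dots> \<le> ennreal ((\<Sum>l<n. b l) ^ (k - 1) * (\<Sum>l<n. Q l ^ k / b l ^ (k - 1)))"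
      by (intro ennreal_leI jensen_fin) (use Q b k in auto)
    also have "\<dots> \<le> ennreal (suminf b ^ (k - 1) * (\<Sum>l<n. Q l ^ k / b l ^ (k - 1)))"
    proof (intro ennreal_leI mult_right_mono power_mono)
      show "(\<Sum>l<n. b l) \<le> suminf b" using sb b by (intro sum_le_suminf) (auto intro: less_imp_le)
    qed (use Q b[THEN less_imp_le] in \<open>auto intro!: sum_nonneg divide_nonneg_nonneg\<close>)
    also have "\<dots> = ennreal (suminf b ^ (k - 1)) * (\<Sum>l<n. ennreal (Q l ^ k / b l ^ (k - 1)))"
      using Q b sb by (simp add: ennreal_mult sum_ennreal suminf_nonneg less_imp_le sum_nonneg)
    also have "\<dots> \<le> ?R"
      by (intro mult_left_mono) (auto intro: sum_le_suminf summableI)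
    finally show ?thesis .
  qed
  then show ?thesis using LIMSEQ_le_const2[OF lim] by blast
qed

lemma JI:
  fixes Q :: "nat \<Rightarrow> 'a \<Rightarrow> real" and b :: "nat \<Rightarrow> real"
  assumes Qm: "\<And>l. Q l \<in> borel_measurable M" and Q: "\<And>l \<omega>. 0 \<le> Q l \<omega>"
    and b: "\<And>l. 0 < b l" and sb: "summable b" and k: "1 \<le> k"
    and E: "\<And>l. (\<integral>\<^sup>+\<omega>. ennreal (Q l \<omega> ^ k) \<partial>M) \<le> ennreal (b l ^ k)"
  shows "(\<integral>\<^sup>+\<omega>. (\<Sum>l. ennreal (Q l \<omega>)) ^ k \<partial>M) \<le> ennreal (suminf b ^ k)"
proof -
  have "(\<integral>\<^sup>+\<omega>. (\<Sum>l. ennreal (Q l \<omega>)) ^ k \<partial>M)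
      \<le> (\<integral>\<^sup>+\<omega>. ennreal (suminf b ^ (k - 1)) * (\<Sum>l. ennreal (Q l \<omega> ^ k / b l ^ (k - 1))) \<partial>M)"
    by (intro nn_integral_mono JI_point Q b sb k)
  also have "\<dots> = ennreal (suminf b ^ (k - 1)) * (\<Sum>l. \<integral>\<^sup>+\<omega>. ennreal (Q l \<omega> ^ k / b l ^ (k - 1)) \<partial>M)"
    using Qm by (simp add: nn_integral_cmult nn_integral_suminf)
  also have "\<dots> \<le> ennreal (suminf b ^ (k - 1)) * (\<Sum>l. ennreal (b l))"
  proof (intro mult_left_mono suminf_le summableI)
    fix l
    have "(\<integral>\<^sup>+\<omega>. ennreal (Q l \<omega> ^ k / b l ^ (k - 1)) \<partial>M) = (\<integral>\<^sup>+\<omega>. ennreal (Q l \<omega> ^ k) * ennreal (1 / b l ^ (k - 1)) \<partial>M)"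
      using b[of l] Q by (intro nn_integral_cong) (simp add: ennreal_mult[symmetric])
    also have "\<dots> = (\<integral>\<^sup>+\<omega>. ennreal (Q l \<omega> ^ k) \<partial>M) * ennreal (1 / b l ^ (k - 1))"
      using Qm by (simp add: nn_integral_multc)
    also have "\<dots> \<le> ennreal (b l ^ k) * ennreal (1 / b l ^ (k - 1))"
      by (intro mult_right_mono E) simp
    also have "\<dots> = ennreal (b l)"
    proof -
      obtain k' where kk: "k = Suc k'" using k by (cases k) auto
      show ?thesis using b[of l] unfolding kk by (simp add: ennreal_mult[symmetric])
    qed
    finally show "(\<integral>\<^sup>+\<omega>. ennreal (Q l \<omega> ^ k / b l ^ (k - 1)) \<partial>M) \<le> ennreal (b l)" .
  qed simp
  also have "\<dots> = ennreal (suminf b ^ k)"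
  proof -
    have "(\<Sum>l. ennreal (b l)) = ennreal (suminf b)" using sb b by (simp add: suminf_ennreal2 less_imp_le)
    moreover have "0 \<le> suminf b" using sb b by (simp add: suminf_nonneg less_imp_le)
    moreover obtain k' where kk: "k = Suc k'" using k by (cases k) auto
    ultimately show ?thesis by (simp add: ennreal_mult[symmetric] kk mult.commute)
  qed
  finally show ?thesis .
qed

lemma core':
  assumes P: "prob_space M" and BM: "std_BM M T B" and t: "0 \<le> t" and tT: "t \<le> T"
    and fd: "\<And>r. (f has_real_derivative f' r) (at r)" and f'c: "continuous_on UNIV f'"
    and G: "0 < G" and fb: "\<And>r. r \<in> {0..t} \<Longrightarrow> \<bar>f r\<bar> \<le> G"
  shows "(\<lambda>\<omega>. rsi f B t \<omega>) \<in> borel_measurable M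
     \<and> (\<integral>\<^sup>+\<omega>. ennreal ((rsi f B t \<omega>) ^ (2*k)) \<partial>M) \<le> ennreal (fact (2*k) * (4 * T)^k * G ^ (2*k))"
proof (cases "t = 0")
  case False
  then have "0 < t" using t by simp
  from core[OF P BM this tT fd f'c G fb, of k]
  have c: "(\<lambda>\<omega>. rsi f B t \<omega>) \<in> borel_measurable M"
       "(\<integral>\<^sup>+\<omega>. ennreal ((rsi f B t \<omega>) ^ (2*k)) \<partial>M) \<le> ennreal (fact (2*k) * (4 * t * G\<^sup>2) ^ k)" by auto
  have "fact (2*k) * (4 * t * G\<^sup>2) ^ k \<le> fact (2*k) * (4 * T)^k * G ^ (2*k)"
  proof -
    have "(4 * t * G\<^sup>2) ^ k \<le> (4 * T * G\<^sup>2) ^ k" using t tT by (intro power_mono mult_right_mono) auto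
    also have "\<dots> = (4 * T)^k * G ^ (2*k)" by (simp add: power_mult_distrib power_mult)
    finally show ?thesis by (simp add: mult.assoc)
  qed
  then show ?thesis using c order_trans ennreal_leI by blast
next
  case True
  interpret prob_space M by (rule P)
  have z: "rsi f B t \<omega> = 0" if "\<omega> \<in> space M" for \<omega>
    using True by (simp add: rsi_def)
  have "(\<lambda>\<omega>. rsi f B t \<omega>) \<in> borel_measurable M"
    by (subst measurable_cong[where g="\<lambda>_. 0"]) (auto simp: z)
  moreover have "(\<integral>\<^sup>+\<omega>. ennreal ((rsi f B t \<omega>) ^ (2*k)) \<partial>M) \<le> ennreal (fact (2*k) * (4 * T)^k * G ^ (2*k))"
  proof (cases "k = 0")
    case True then show ?thesis by (simp add: emeasure_space_1)
  next
    case False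
    have "(\<integral>\<^sup>+\<omega>. ennreal ((rsi f B t \<omega>) ^ (2*k)) \<partial>M) = (\<integral>\<^sup>+\<omega>. 0 \<partial>M)"
      using False by (intro nn_integral_cong) (simp add: z)
    then show ?thesis by simp
  qed
  ultimately show ?thesis by blast
qed

lemma pow_sum2: "0 \<le> (a::real) \<Longrightarrow> 0 \<le> b \<Longrightarrow> (a + b) ^ k \<le> 2 ^ k * (a ^ k + b ^ k)"
proof -
  assume a: "0 \<le> a" and b: "0 \<le> b"
  have "(a + b) ^ k \<le> (2 * max a b) ^ k" using a b by (intro power_mono) auto
  also have "\<dots> = 2 ^ k * max a b ^ k" by (simp add: power_mult_distrib)
  also have "max a b ^ k \<le> a ^ k + b ^ k" using a b by (auto simp: max_def)
  finally show ?thesis by simp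
qed

lemma J_moment:
  assumes P: "prob_space M" and B1: "std_BM M T B1" and B2: "flag \<Longrightarrow> std_BM M T B2"
    and t: "0 \<le> t" and tT: "t \<le> T"
    and fd: "\<And>r. (f has_real_derivative f' r) (at r)" and f'c: "continuous_on UNIV f'"
    and G: "0 < G" and fb: "\<And>r. r \<in> {0..t} \<Longrightarrow> \<bar>f r\<bar> \<le> G"
  shows "(\<lambda>\<omega>. (rsi f B1 t \<omega>)\<^sup>2 + (if flag then (rsi f B2 t \<omega>)\<^sup>2 else 0)) \<in> borel_measurable M
     \<and> (\<integral>\<^sup>+\<omega>. ennreal (((rsi f B1 t \<omega>)\<^sup>2 + (if flag then (rsi f B2 t \<omega>)\<^sup>2 else 0)) ^ k) \<partial>M)
          \<le> ennreal (2 ^ (k+1) * (fact (2*k) * (4 * T)^k * G ^ (2*k)))"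
proof -
  interpret prob_space M by (rule P)
  let ?g = "fact (2*k) * (4 * T)^k * G ^ (2*k)"
  have c1: "(\<lambda>\<omega>. rsi f B1 t \<omega>) \<in> borel_measurable M"
     "(\<integral>\<^sup>+\<omega>. ennreal ((rsi f B1 t \<omega>) ^ (2*k)) \<partial>M) \<le> ennreal ?g"
    using core'[OF P B1 t tT fd f'c G fb, of k] by auto
  have c2: "(\<lambda>\<omega>. if flag then (rsi f B2 t \<omega>)\<^sup>2 else 0) \<in> borel_measurable M
     \<and> (\<integral>\<^sup>+\<omega>. ennreal ((if flag then (rsi f B2 t \<omega>)\<^sup>2 else 0) ^ k) \<partial>M) \<le> ennreal ?g"
  proof (cases flag)
    case True
    have "(\<lambda>\<omega>. rsi f B2 t \<omega>) \<in> borel_measurable M"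
     "(\<integral>\<^sup>+\<omega>. ennreal ((rsi f B2 t \<omega>) ^ (2*k)) \<partial>M) \<le> ennreal ?g"
      using core'[OF P B2[OF True] t tT fd f'c G fb, of k] by auto
    then show ?thesis using True by (simp add: power_mult)
  next
    case False
    have "0 \<le> ?g" using tT t G by simp
    then show ?thesis using False by (cases "k = 0") (simp_all add: emeasure_space_1 power_0_left)
  qed
  have mJ: "(\<lambda>\<omega>. (rsi f B1 t \<omega>)\<^sup>2 + (if flag then (rsi f B2 t \<omega>)\<^sup>2 else 0)) \<in> borel_measurable M"
  proof (rule borel_measurable_add)
    show "(\<lambda>\<omega>. (rsi f B1 t \<omega>)\<^sup>2) \<in> borel_measurable M" using c1(1) by measurable
    show "(\<lambda>\<omega>. if flag then (rsi f B2 t \<omega>)\<^sup>2 else 0) \<in> borel_measurable M" using c2 by blast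
  qed
  have "(\<integral>\<^sup>+\<omega>. ennreal (((rsi f B1 t \<omega>)\<^sup>2 + (if flag then (rsi f B2 t \<omega>)\<^sup>2 else 0)) ^ k) \<partial>M)
     \<le> (\<integral>\<^sup>+\<omega>. ennreal (2^k) * ennreal ((rsi f B1 t \<omega>) ^ (2*k)) + ennreal (2^k) * ennreal ((if flag then (rsi f B2 t \<omega>)\<^sup>2 else 0) ^ k) \<partial>M)"
  proof (intro nn_integral_mono)
    fix \<omega>
    have "((rsi f B1 t \<omega>)\<^sup>2 + (if flag then (rsi f B2 t \<omega>)\<^sup>2 else 0)) ^ k
        \<le> 2 ^ k * (((rsi f B1 t \<omega>)\<^sup>2) ^ k + (if flag then (rsi f B2 t \<omega>)\<^sup>2 else 0) ^ k)"
      by (intro pow_sum2) auto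
    then show "ennreal (((rsi f B1 t \<omega>)\<^sup>2 + (if flag then (rsi f B2 t \<omega>)\<^sup>2 else 0)) ^ k)
      \<le> ennreal (2^k) * ennreal ((rsi f B1 t \<omega>) ^ (2*k)) + ennreal (2^k) * ennreal ((if flag then (rsi f B2 t \<omega>)\<^sup>2 else 0) ^ k)"
      by (simp add: ennreal_mult[symmetric] ennreal_plus[symmetric] power_mult distrib_left del: ennreal_plus)
  qed
  also have "\<dots> = ennreal (2^k) * (\<integral>\<^sup>+\<omega>. ennreal ((rsi f B1 t \<omega>) ^ (2*k)) \<partial>M)
       + ennreal (2^k) * (\<integral>\<^sup>+\<omega>. ennreal ((if flag then (rsi f B2 t \<omega>)\<^sup>2 else 0) ^ k) \<partial>M)"
  proof -
    define h2 where "h2 \<omega> = (if flag then (rsi f B2 t \<omega>)\<^sup>2 else 0)" for \<omega>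
    have [measurable]: "h2 \<in> borel_measurable M" using c2 unfolding h2_def[abs_def] by blast
    have [measurable]: "(\<lambda>\<omega>. rsi f B1 t \<omega>) \<in> borel_measurable M" by (rule c1(1))
    show ?thesis unfolding h2_def[symmetric] by (simp add: nn_integral_add nn_integral_cmult)
  qed
  also have "\<dots> \<le> ennreal (2^k) * ennreal ?g + ennreal (2^k) * ennreal ?g"
    using c1(2) c2 by (intro add_mono mult_left_mono) auto
  also have "\<dots> = ennreal (2 ^ (k+1) * ?g)"
    using t tT G by (simp add: ennreal_mult[symmetric] ennreal_plus[symmetric] del: ennreal_plus)
  finally show ?thesis using mJ by blast
qed

lemma rsi_scale: "rsi f (\<lambda>r \<omega>. e * B r \<omega>) t \<omega> = e * rsi f B t \<omega>"
proof -
  have "integral {0..t} (\<lambda>r. deriv f r * (e * B r \<omega>)) = integral {0..t} (\<lambda>r. e *\<^sub>R (deriv f r * B r \<omega>))"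
    by (simp add: algebra_simps)
  also have "\<dots> = e * integral {0..t} (\<lambda>r. deriv f r * B r \<omega>)" by simp
  finally show ?thesis by (simp add: rsi_def algebra_simps)
qed

lemma int_complex:
  fixes g x y :: "real \<Rightarrow> real"
  assumes g: "continuous_on {0..t} g" and x: "continuous_on {0..t} x" and y: "continuous_on {0..t} y"
  shows "integral {0..t} (\<lambda>r. complex_of_real (g r) * (complex_of_real c * Complex (x r) (y r)))
       = complex_of_real c * Complex (integral {0..t} (\<lambda>r. g r * x r)) (integral {0..t} (\<lambda>r. g r * y r))"
proof -
  let ?I1 = "integral {0..t} (\<lambda>r. g r * x r)" and ?I2 = "integral {0..t} (\<lambda>r. g r * y r)"
  have h1: "((\<lambda>r. g r * x r) has_integral ?I1) {0..t}"
    by (intro integrable_integral integrable_continuous_interval continuous_on_mult g x)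
  have h2: "((\<lambda>r. g r * y r) has_integral ?I2) {0..t}"
    by (intro integrable_integral integrable_continuous_interval continuous_on_mult g y)
  have hi: "((\<lambda>r. complex_of_real c * (complex_of_real (g r * x r) + \<i> * complex_of_real (g r * y r)))
      has_integral (complex_of_real c * (complex_of_real ?I1 + \<i> * complex_of_real ?I2))) {0..t}"
    by (intro has_integral_mult_right has_integral_add has_integral_of_real h1 h2)
  have e1: "(\<lambda>r. complex_of_real c * (complex_of_real (g r * x r) + \<i> * complex_of_real (g r * y r)))
      = (\<lambda>r. complex_of_real (g r) * (complex_of_real c * Complex (x r) (y r)))"
    by (auto simp: Complex_eq algebra_simps)
  have e2: "complex_of_real c * (complex_of_real ?I1 + \<i> * complex_of_real ?I2) = complex_of_real c * Complex ?I1 ?I2"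
    by (simp add: Complex_eq)
  have "((\<lambda>r. complex_of_real (g r) * (complex_of_real c * Complex (x r) (y r))) has_integral (complex_of_real c * Complex ?I1 ?I2)) {0..t}"
    using hi unfolding e1 e2 .
  then show ?thesis by (rule integral_unique)
qed

lemma dsi_eq:
  fixes x y :: "real \<Rightarrow> real"
  assumes fd: "\<And>r. (f has_real_derivative f' r) (at r)" and f'c: "continuous_on UNIV f'"
    and x: "continuous_on {0..t} x" and y: "continuous_on {0..t} y"
  shows "det_stoch_int f (\<lambda>r. complex_of_real c * Complex (x r) (y r)) t
       = complex_of_real c * Complex (f t * x t - f 0 * x 0 - integral {0..t} (\<lambda>r. deriv f r * x r))
                                   (f t * y t - f 0 * y 0 - integral {0..t} (\<lambda>r. deriv f r * y r))"
proof -
  have df: "deriv f = f'" using fd by (auto intro!: ext DERIV_imp_deriv)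
  have gc: "continuous_on {0..t} f'" using f'c by (rule continuous_on_subset) simp
  show ?thesis
    unfolding det_stoch_int_def df int_complex[OF gc x y]
    by (simp add: Complex_eq algebra_simps)
qed

definition cc :: "(nat \<Rightarrow> real) \<Rightarrow> nat \<Rightarrow> int \<Rightarrow> real" where
  "cc A l m = (if m = 0 then sqrt (A l) else if 0 < m then sqrt (A l / 2) else (-1) ^ nat (- m) * sqrt (A l / 2))"

definition ee :: "int \<Rightarrow> real" where
  "ee m = (if m = 0 then 0 else if 0 < m then -1 else 1)"

lemma noise_rep:
  "noise_coeff A \<beta> l m r \<omega> = complex_of_real (cc A l m) * Complex (\<beta> (1, l, nat \<bar>m\<bar>) r \<omega>) (ee m * \<beta> (2, l, nat \<bar>m\<bar>) r \<omega>)"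
proof -
  have "m = 0 \<or> 0 < m \<or> m < 0" by auto
  moreover have ?thesis if "m = 0" using that by (simp add: noise_coeff_def cc_def ee_def complex_of_real_def complex_eq_iff)
  moreover have ?thesis if "0 < m" using that by (simp add: noise_coeff_def cc_def ee_def)
  moreover have ?thesis if "m < 0" using that by (simp add: noise_coeff_def cc_def ee_def)
  ultimately show ?thesis by blast
qed

lemma cc_sq: "0 \<le> A l \<Longrightarrow> (cc A l m)\<^sup>2 \<le> A l"
proof -
  assume A: "0 \<le> A l"
  have n1: "((-1::real) ^ n)\<^sup>2 = 1" for n by (simp add: power_mult[symmetric])
  show ?thesis using A by (auto simp: cc_def power_mult_distrib n1)
qed

lemma stoch_bound:
  fixes M :: "'a measure" and \<beta> :: "nat \<times> nat \<times> nat \<Rightarrow> real \<Rightarrow> 'a \<Rightarrow> real"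
    and F F' :: "nat \<Rightarrow> real \<Rightarrow> real" and G w AA :: "nat \<Rightarrow> real" and c :: "nat \<Rightarrow> int \<Rightarrow> real"
  assumes P: "prob_space M" and nf: "noise_family M T \<beta>" and t: "0 \<le> t" "t \<le> T" and k: "1 \<le> k"
    and Fd: "\<And>l r. (F l has_real_derivative F' l r) (at r)" and F'c: "\<And>l. continuous_on UNIV (F' l)"
    and Gp: "\<And>l. 0 < G l" and Fb: "\<And>l r. r \<in> {0..t} \<Longrightarrow> \<bar>F l r\<bar> \<le> G l"
    and c: "\<And>l m. (c l m)\<^sup>2 \<le> AA l" and w: "\<And>l. 0 \<le> w l" and AA: "\<And>l. 0 \<le> AA l"
    and sb: "summable (\<lambda>l. w l * AA l * (2 * real l + 1) * (G l)\<^sup>2)"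
  shows "(\<forall>l m. \<bar>m\<bar> \<le> int l \<longrightarrow> (\<lambda>\<omega>. complex_of_real (c l m) * Complex (rsi (F l) (\<beta> (1,l,nat \<bar>m\<bar>)) t \<omega>) (ee m * rsi (F l) (\<beta> (2,l,nat \<bar>m\<bar>)) t \<omega>)) \<in> borel_measurable M)
    \<and> (\<exists>B. (\<integral>\<^sup>+\<omega>. (\<Sum>l. ennreal (\<Sum>m\<in>{- int l..int l}. w l * (cmod (complex_of_real (c l m) * Complex (rsi (F l) (\<beta> (1,l,nat \<bar>m\<bar>)) t \<omega>) (ee m * rsi (F l) (\<beta> (2,l,nat \<bar>m\<bar>)) t \<omega>)))\<^sup>2)) ^ k \<partial>M) \<le> ennreal B)"
proof -
  interpret prob_space M by (rule P)
  define Z where "Z l m \<omega> = complex_of_real (c l m) * Complex (rsi (F l) (\<beta> (1,l,nat \<bar>m\<bar>)) t \<omega>) (ee m * rsi (F l) (\<beta> (2,l,nat \<bar>m\<bar>)) t \<omega>)" for l m \<omega>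
  define R1 where "R1 l m \<omega> = rsi (F l) (\<beta> (1,l,nat \<bar>m\<bar>)) t \<omega>" for l m \<omega>
  define R2 where "R2 l m \<omega> = rsi (F l) (\<beta> (2,l,nat \<bar>m\<bar>)) t \<omega>" for l m \<omega>
  define Jf where "Jf l m \<omega> = (R1 l m \<omega>)\<^sup>2 + (if m \<noteq> 0 then (R2 l m \<omega>)\<^sup>2 else 0)" for l m \<omega>
  define \<gamma> where "\<gamma> = fact (2*k) * (4 * T)^k"
  define \<gamma>1 where "\<gamma>1 = max 1 \<gamma>"
  have BMs: "\<And>i. i \<in> bm_index \<Longrightarrow> std_BM M T (\<beta> i)" using nf unfolding noise_family_def by blast
  have BM1: "std_BM M T (\<beta> (1,l,nat \<bar>m\<bar>))" if "\<bar>m\<bar> \<le> int l" for l m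
    using that by (intro BMs) (auto simp: bm_index_def)
  have BM2: "std_BM M T (\<beta> (2,l,nat \<bar>m\<bar>))" if "\<bar>m\<bar> \<le> int l" "m \<noteq> 0" for l m
    using that by (intro BMs) (auto simp: bm_index_def)
  have JM: "(\<lambda>\<omega>. Jf l m \<omega>) \<in> borel_measurable M
     \<and> (\<integral>\<^sup>+\<omega>. ennreal ((Jf l m \<omega>) ^ k) \<partial>M) \<le> ennreal (2 ^ (k+1) * (\<gamma> * G l ^ (2*k)))"
    if "\<bar>m\<bar> \<le> int l" for l m
    using J_moment[where flag="m \<noteq> 0" and k=k, OF P BM1[OF that] BM2[OF that] t Fd[of l] F'c[of l] Gp[of l] Fb[of _ l]]
    unfolding Jf_def R1_def R2_def \<gamma>_def by (simp add: mult.assoc)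
  have R1m: "R1 l m \<in> borel_measurable M" if "\<bar>m\<bar> \<le> int l" for l m
    using core'[OF P BM1[OF that] t Fd[of l] F'c[of l] Gp[of l] Fb[of _ l]] unfolding R1_def[abs_def] by blast
  have Zm: "Z l m \<in> borel_measurable M" if "\<bar>m\<bar> \<le> int l" for l m
  proof (cases "m = 0")
    case True
    have "Z l m = (\<lambda>\<omega>. complex_of_real (c l m) * complex_of_real (R1 l m \<omega>))"
      using True by (auto simp: Z_def R1_def ee_def complex_of_real_def)
    then show ?thesis using R1m[OF that] by simp
  next
    case False
    have R2m: "R2 l m \<in> borel_measurable M"
      using core'[OF P BM2[OF that False] t Fd[of l] F'c[of l] Gp[of l] Fb[of _ l]] unfolding R2_def[abs_def] by blast
    have "Z l m = (\<lambda>\<omega>. complex_of_real (c l m) * (complex_of_real (R1 l m \<omega>) + \<i> * complex_of_real (ee m * R2 l m \<omega>)))"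
      by (auto simp: Z_def R1_def R2_def Complex_eq)
    then show ?thesis using R1m[OF that] R2m by simp
  qed
  have cmodZ: "(cmod (Z l m \<omega>))\<^sup>2 \<le> AA l * Jf l m \<omega>" for l m \<omega>
  proof -
    have "(cmod (Z l m \<omega>))\<^sup>2 = (c l m)\<^sup>2 * ((R1 l m \<omega>)\<^sup>2 + (ee m)\<^sup>2 * (R2 l m \<omega>)\<^sup>2)"
      by (simp add: Z_def R1_def R2_def norm_mult complex_norm power_mult_distrib)
    also have "\<dots> \<le> AA l * Jf l m \<omega>"
    proof (rule mult_mono[OF c])
      have "(ee m)\<^sup>2 * (R2 l m \<omega>)\<^sup>2 \<le> (if m \<noteq> 0 then (R2 l m \<omega>)\<^sup>2 else 0)"
        by (auto simp: ee_def)
      then show "(R1 l m \<omega>)\<^sup>2 + (ee m)\<^sup>2 * (R2 l m \<omega>)\<^sup>2 \<le> Jf l m \<omega>" by (simp add: Jf_def)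
    qed (auto simp: AA)
    finally show ?thesis .
  qed
  have Jnn: "0 \<le> Jf l m \<omega>" for l m \<omega> by (simp add: Jf_def)
  define I where "I l = {- int l..int l}" for l
  have cardI: "real (card (I l)) = 2 * real l + 1" for l by (simp add: I_def)
  define Q where "Q l \<omega> = (\<Sum>m\<in>I l. w l * (cmod (Z l m \<omega>))\<^sup>2)" for l \<omega>
  have Qnn: "0 \<le> Q l \<omega>" for l \<omega> unfolding Q_def using w by (intro sum_nonneg) auto
  have Qm: "Q l \<in> borel_measurable M" for l
  proof -
    have "(\<lambda>\<omega>. w l * (cmod (Z l m \<omega>))\<^sup>2) \<in> borel_measurable M" if "m \<in> I l" for m
    proof -
      have "\<bar>m\<bar> \<le> int l" using that by (auto simp: I_def)
      then have [measurable]: "Z l m \<in> borel_measurable M" by (rule Zm)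
      show ?thesis by measurable
    qed
    then show ?thesis unfolding Q_def[abs_def] by (rule borel_measurable_sum)
  qed
  define b where "b l = 4 * \<gamma>1 * (w l * AA l * (2 * real l + 1) * (G l)\<^sup>2) + (1/2) ^ l" for l
  have bpos: "0 < b l" for l
    unfolding b_def using w[of l] AA[of l] Gp[of l] by (intro add_nonneg_pos) (auto simp: \<gamma>1_def)
  have bsum: "summable b"
    unfolding b_def by (intro summable_add summable_mult sb summable_geometric) simp
  have EQ: "(\<integral>\<^sup>+\<omega>. ennreal (Q l \<omega> ^ k) \<partial>M) \<le> ennreal (b l ^ k)" for l
  proof -
    define \<kappa> where "\<kappa> = (w l * AA l) ^ k * real (card (I l)) ^ (k - 1)"
    have \<kappa>nn: "0 \<le> \<kappa>" unfolding \<kappa>_def using w AA by simp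
    have pw: "Q l \<omega> ^ k \<le> \<kappa> * (\<Sum>m\<in>I l. (Jf l m \<omega>) ^ k)" for \<omega>
    proof -
      have "Q l \<omega> \<le> (\<Sum>m\<in>I l. w l * (AA l * Jf l m \<omega>))"
        unfolding Q_def using w cmodZ by (intro sum_mono mult_left_mono) auto
      also have "\<dots> = w l * AA l * (\<Sum>m\<in>I l. Jf l m \<omega>)" by (simp add: sum_distrib_left mult.assoc)
      finally have "Q l \<omega> ^ k \<le> (w l * AA l * (\<Sum>m\<in>I l. Jf l m \<omega>)) ^ k"
        using Qnn by (intro power_mono) auto
      also have "\<dots> = (w l * AA l) ^ k * (\<Sum>m\<in>I l. Jf l m \<omega>) ^ k" by (simp add: power_mult_distrib)
      also have "\<dots> \<le> (w l * AA l) ^ k * ((\<Sum>m\<in>I l. 1) ^ (k - 1) * (\<Sum>m\<in>I l. (Jf l m \<omega>) ^ k / 1 ^ (k - 1)))"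
        using w AA by (intro mult_left_mono jensen_fin) (use k in \<open>auto simp: I_def Jnn\<close>)
      finally show ?thesis by (simp add: \<kappa>_def mult.assoc)
    qed
    have "(\<integral>\<^sup>+\<omega>. ennreal (Q l \<omega> ^ k) \<partial>M) \<le> (\<integral>\<^sup>+\<omega>. ennreal \<kappa> * (\<Sum>m\<in>I l. ennreal ((Jf l m \<omega>) ^ k)) \<partial>M)"
    proof (intro nn_integral_mono)
      fix \<omega>
      have "ennreal (Q l \<omega> ^ k) \<le> ennreal (\<kappa> * (\<Sum>m\<in>I l. (Jf l m \<omega>) ^ k))" using pw by (rule ennreal_leI)
      also have "\<dots> = ennreal \<kappa> * (\<Sum>m\<in>I l. ennreal ((Jf l m \<omega>) ^ k))"
        using \<kappa>nn Jnn by (simp add: ennreal_mult sum_ennreal sum_nonneg)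
      finally show "ennreal (Q l \<omega> ^ k) \<le> ennreal \<kappa> * (\<Sum>m\<in>I l. ennreal ((Jf l m \<omega>) ^ k))" .
    qed
    also have "\<dots> = ennreal \<kappa> * (\<Sum>m\<in>I l. \<integral>\<^sup>+\<omega>. ennreal ((Jf l m \<omega>) ^ k) \<partial>M)"
    proof -
      have mm: "(\<lambda>\<omega>. ennreal ((Jf l m \<omega>) ^ k)) \<in> borel_measurable M" if "m \<in> I l" for m
      proof -
        have "(\<lambda>\<omega>. Jf l m \<omega>) \<in> borel_measurable M" using JM[of m l] that by (simp add: I_def abs_le_iff)
        then show ?thesis by measurable
      qed
      have "(\<integral>\<^sup>+\<omega>. (\<Sum>m\<in>I l. ennreal ((Jf l m \<omega>) ^ k)) \<partial>M) = (\<Sum>m\<in>I l. \<integral>\<^sup>+\<omega>. ennreal ((Jf l m \<omega>) ^ k) \<partial>M)"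
        by (rule nn_integral_sum) (use mm in auto)
      moreover have "(\<lambda>\<omega>. \<Sum>m\<in>I l. ennreal ((Jf l m \<omega>) ^ k)) \<in> borel_measurable M"
        using mm by (rule borel_measurable_sum)
      ultimately show ?thesis by (simp add: nn_integral_cmult)
    qed
    also have "\<dots> \<le> ennreal \<kappa> * (\<Sum>m\<in>I l. ennreal (2 ^ (k+1) * (\<gamma> * G l ^ (2*k))))"
      using JM by (intro mult_left_mono sum_mono) (auto simp: I_def abs_le_iff)
    also have "\<dots> = ennreal (\<kappa> * real (card (I l)) * (2 ^ (k+1) * (\<gamma> * G l ^ (2*k))))"
      using \<kappa>nn t by (simp add: ennreal_mult \<gamma>_def ennreal_of_nat_eq_real_of_nat mult.assoc)
    also have "\<dots> \<le> ennreal (b l ^ k)"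
    proof (rule ennreal_leI)
      obtain k' where kk: "k = Suc k'" using k by (cases k) auto
      have X: "0 \<le> w l * AA l * (2 * real l + 1) * (G l)\<^sup>2" using w AA by simp
      have "\<kappa> * real (card (I l)) = (w l * AA l * (2 * real l + 1)) ^ k"
        unfolding \<kappa>_def cardI kk by (simp add: power_mult_distrib)
      then have "\<kappa> * real (card (I l)) * (2 ^ (k+1) * (\<gamma> * G l ^ (2*k)))
          = (2 ^ (k+1) * \<gamma>) * (w l * AA l * (2 * real l + 1) * (G l)\<^sup>2) ^ k"
        by (simp add: power_mult_distrib power_mult[symmetric] mult.commute mult.left_commute)
      also have "\<dots> \<le> (4 ^ k * \<gamma>1 ^ k) * (w l * AA l * (2 * real l + 1) * (G l)\<^sup>2) ^ k"
      proof (intro mult_right_mono mult_mono)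
        show "(2::real) ^ (k + 1) \<le> 4 ^ k"
        proof -
          have "(2::real) ^ (k + 1) = 2 * 2 ^ k" by simp
          also have "\<dots> \<le> 2 ^ k * 2 ^ k" using k by (intro mult_right_mono) (auto simp: one_le_power[of 2 k] self_le_power)
          also have "\<dots> = 4 ^ k" by (simp add: power_mult_distrib[symmetric])
          finally show ?thesis .
        qed
        show "\<gamma> \<le> \<gamma>1 ^ k"
        proof -
          have "\<gamma> \<le> \<gamma>1" by (simp add: \<gamma>1_def)
          also have "\<gamma>1 \<le> \<gamma>1 ^ k" using k by (intro self_le_power) (auto simp: \<gamma>1_def)
          finally show ?thesis .
        qed
      qed (use X t in \<open>auto simp: \<gamma>_def\<close>)
      also have "\<dots> = (4 * \<gamma>1 * (w l * AA l * (2 * real l + 1) * (G l)\<^sup>2)) ^ k"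
        by (simp add: power_mult_distrib)
      also have "\<dots> \<le> b l ^ k"
        unfolding b_def using X by (intro power_mono) (auto simp: \<gamma>1_def)
      finally show "\<kappa> * real (card (I l)) * (2 ^ (k+1) * (\<gamma> * G l ^ (2*k))) \<le> b l ^ k" .
    qed
    finally show ?thesis .
  qed
  have "(\<integral>\<^sup>+\<omega>. (\<Sum>l. ennreal (Q l \<omega>)) ^ k \<partial>M) \<le> ennreal (suminf b ^ k)"
    by (rule JI[OF Qm Qnn bpos bsum k EQ])
  then show ?thesis using Zm unfolding Q_def I_def Z_def by blast
qed

lemma w_bound:
  assumes l: "1 \<le> l"
  shows "(1 + lam l) powr s \<le> 3 powr \<bar>s\<bar> * real l powr (2 * s)"
proof -
  have l1: "1 \<le> real l" using l by simp
  have lo: "real l powr 2 \<le> 1 + lam l" using l1 by (simp add: lam_def power2_eq_square algebra_simps)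
  have hi: "1 + lam l \<le> 3 * real l powr 2"
  proof -
    have "real l \<le> real l * real l" using l1 by (simp add: mult_le_cancel_left1)
    moreover have "1 \<le> real l * real l" using l1 by (metis mult_mono one_le_numeral order.trans mult_1 zero_le_one)
    moreover have "1 + lam l = 1 + real l + real l * real l" by (simp add: lam_def algebra_simps)
    moreover have "3 * real l powr 2 = 3 * (real l * real l)" using l1 by (simp add: power2_eq_square)
    ultimately show ?thesis by linarith
  qed
  have lp: "0 < real l powr 2" using l1 by simp
  have e0: "(real l powr 2) powr s = real l powr (2 * s)" by (subst powr_powr) simp
  have e: "(real l ^ 2) powr s = real l powr (2 * s)" using e0 by simp
  show ?thesis
  proof (cases "0 \<le> s")
    case True
    have "(1 + lam l) powr s \<le> (3 * real l powr 2) powr s"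
      using hi True by (intro powr_mono2) (auto simp: lam_def)
    also have "\<dots> = 3 powr s * real l powr (2 * s)" by (simp add: powr_mult e)
    also have "\<dots> \<le> 3 powr \<bar>s\<bar> * real l powr (2 * s)" using True by simp
    finally show ?thesis .
  next
    case False
    have "(1 + lam l) powr s \<le> (real l powr 2) powr s"
      using lo False lp by (intro powr_mono2') auto
    also have "\<dots> = 1 * real l powr (2 * s)" by (simp add: e)
    also have "\<dots> \<le> 3 powr \<bar>s\<bar> * real l powr (2 * s)"
      by (intro mult_right_mono ge_one_powr_ge_zero) auto
    finally show ?thesis .
  qed
qed

lemma summ_gen:
  fixes A h :: "nat \<Rightarrow> real"
  assumes Ab: "\<forall>l>l0. A l \<le> C * real l powr (- \<alpha>)" and A: "\<forall>l. 0 \<le> A l" and C: "0 < C"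
    and h: "\<And>l. 0 \<le> h l" and hb: "\<And>l. 1 \<le> l \<Longrightarrow> h l \<le> H * real l powr q"
    and e: "2 * s + q - \<alpha> < -1"
  shows "summable (\<lambda>l. (1 + lam l) powr s * A l * h l)"
proof (rule summable_comparison_test'[where N="Suc l0"])
  let ?K = "3 powr \<bar>s\<bar> * C * H"
  show "summable (\<lambda>l. ?K * real l powr (2 * s + q - \<alpha>))"
    by (intro summable_mult) (simp add: summable_real_powr_iff e)
  show "norm ((1 + lam n) powr s * A n * h n) \<le> ?K * real n powr (2 * s + q - \<alpha>)" if n: "Suc l0 \<le> n" for n
  proof -
    from n have n1: "1 \<le> n" and nl: "n > l0" by auto
    have H: "0 \<le> H"
    proof -
      have "0 \<le> H * real n powr q" using h[of n] hb[OF n1] by linarith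
      moreover have "0 < real n powr q" using n1 by simp
      ultimately show ?thesis by (simp add: zero_le_mult_iff)
    qed
    have "norm ((1 + lam n) powr s * A n * h n) = (1 + lam n) powr s * A n * h n"
      using A h by (simp add: abs_mult)
    also have "\<dots> \<le> (3 powr \<bar>s\<bar> * real n powr (2 * s)) * (C * real n powr (- \<alpha>)) * (H * real n powr q)"
      using w_bound[OF n1, of s] Ab nl hb[OF n1] A h less_imp_le[OF C] by (intro mult_mono) auto
    also have "\<dots> = ?K * (real n powr (2 * s) * real n powr (- \<alpha>) * real n powr q)" by (simp add: algebra_simps)
    also have "real n powr (2 * s) * real n powr (- \<alpha>) * real n powr q = real n powr (2 * s + q - \<alpha>)"
      by (simp add: powr_add[symmetric] algebra_simps)
    finally show "norm ((1 + lam n) powr s * A n * h n) \<le> ?K * real n powr (2 * s + q - \<alpha>)" .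
  qed
qed

lemma pow_sum2_enn: "((a::ennreal) + b) ^ k \<le> 2 ^ k * (a ^ k + b ^ k)"
proof (cases "k = 0")
  case True then show ?thesis by simp
next
  case False
  show ?thesis
  proof (cases "a = \<top> \<or> b = \<top>")
    case True
    have t: "a ^ k + b ^ k = \<top>" using True False by (auto simp: power_eq_top_ennreal)
    have "(2::ennreal) ^ k \<noteq> 0" by simp
    then have "2 ^ k * (\<top>::ennreal) = \<top>" by (rule ennreal_top_mult_left)
    then show ?thesis unfolding t by simp
  next
    case nt: False
    then have na: "a \<noteq> \<top>" and nb: "b \<noteq> \<top>" by auto
    obtain x where x: "a = ennreal x" "0 \<le> x" using na by (cases a) auto
    obtain y where y: "b = ennreal y" "0 \<le> y" using nb by (cases b) auto
    have "(x + y) ^ k \<le> 2 ^ k * (x ^ k + y ^ k)" by (rule pow_sum2[OF x(2) y(2)])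
    then have "ennreal ((x + y) ^ k) \<le> ennreal (2 ^ k * (x ^ k + y ^ k))" by (rule ennreal_leI)
    moreover have "(a + b) ^ k = ennreal ((x + y) ^ k)" using x y by (simp add: ennreal_power[symmetric] ennreal_plus[symmetric] del: ennreal_plus)
    moreover have "2 ^ k * (a ^ k + b ^ k) = ennreal (2 ^ k * (x ^ k + y ^ k))"
    proof -
      have e2: "ennreal (2 ^ k) = 2 ^ k" by (simp add: ennreal_power[symmetric])
      show ?thesis using x y by (simp add: ennreal_power ennreal_mult e2)
    qed
    ultimately show ?thesis by simp
  qed
qed

lemma cmod_sum_sq: "(cmod (a + b))\<^sup>2 \<le> 2 * (cmod a)\<^sup>2 + 2 * (cmod b)\<^sup>2"
proof -
  have "cmod (a + b) \<le> cmod a + cmod b" by (rule norm_triangle_ineq)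
  then have "(cmod (a + b))\<^sup>2 \<le> (cmod a + cmod b)\<^sup>2" by (intro power_mono) auto
  also have "\<dots> \<le> 2 * (cmod a)\<^sup>2 + 2 * (cmod b)\<^sup>2"
  proof -
    have h: "0 \<le> (cmod a - cmod b)\<^sup>2" by simp
    show ?thesis using h by (auto simp: power2_eq_square algebra_simps)
  qed
  finally show ?thesis .
qed

lemma assemble:
  fixes U :: "'a \<Rightarrow> nat \<Rightarrow> int \<Rightarrow> complex" and D :: "nat \<Rightarrow> int \<Rightarrow> complex" and Z :: "nat \<Rightarrow> int \<Rightarrow> 'a \<Rightarrow> complex"
  assumes P: "prob_space M" and k: "1 \<le> k"
    and U0: "\<And>\<omega> l m. int l < \<bar>m\<bar> \<Longrightarrow> U \<omega> l m = 0"
    and rep: "\<And>\<omega> l m. \<omega> \<in> space M \<Longrightarrow> \<bar>m\<bar> \<le> int l \<Longrightarrow> U \<omega> l m = D l m + Z l m \<omega>"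
    and Zm: "\<And>l m. \<bar>m\<bar> \<le> int l \<Longrightarrow> Z l m \<in> borel_measurable M"
    and ZB: "(\<integral>\<^sup>+\<omega>. (\<Sum>l. ennreal (\<Sum>m\<in>{- int l..int l}. (1 + lam l) powr s * (cmod (Z l m \<omega>))\<^sup>2)) ^ k \<partial>M) \<le> ennreal B"
    and B: "0 \<le> B"
    and HD: "(\<Sum>l. \<Sum>m\<in>{- int l..int l}. ennreal ((1 + lam l) powr s * (cmod (D l m))\<^sup>2)) \<le> ennreal H"
    and H: "0 \<le> H"
  shows "(\<forall>l m. (\<lambda>\<omega>. U \<omega> l m) \<in> borel_measurable M)
    \<and> (\<integral>\<^sup>+\<omega>. hs_sq s (U \<omega>) ^ k \<partial>M) \<le> ennreal (4 ^ k * (H ^ k + B))"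
proof -
  interpret prob_space M by (rule P)
  define w where "w l = (1 + lam l) powr s" for l
  have wnn: "0 \<le> w l" for l by (simp add: w_def)
  have Um: "(\<lambda>\<omega>. U \<omega> l m) \<in> borel_measurable M" for l m
  proof (cases "\<bar>m\<bar> \<le> int l")
    case True
    have [measurable]: "Z l m \<in> borel_measurable M" using Zm[OF True] .
    have "(\<lambda>\<omega>. D l m + Z l m \<omega>) \<in> borel_measurable M" by measurable
    then show ?thesis by (subst measurable_cong[where g="\<lambda>\<omega>. D l m + Z l m \<omega>"]) (auto simp: rep True)
  next
    case False
    then show ?thesis by (simp add: U0)
  qed
  define HDs where "HDs = (\<Sum>l. \<Sum>m\<in>{- int l..int l}. ennreal (w l * (cmod (D l m))\<^sup>2))"
  define HZ where "HZ \<omega> = (\<Sum>l. ennreal (\<Sum>m\<in>{- int l..int l}. w l * (cmod (Z l m \<omega>))\<^sup>2))" for \<omega>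
  have HZm: "HZ \<in> borel_measurable M"
  proof -
    have "(\<lambda>\<omega>. ennreal (\<Sum>m\<in>{- int l..int l}. w l * (cmod (Z l m \<omega>))\<^sup>2)) \<in> borel_measurable M" for l
    proof -
      have "(\<lambda>\<omega>. w l * (cmod (Z l m \<omega>))\<^sup>2) \<in> borel_measurable M" if "m \<in> {- int l..int l}" for m
      proof -
        have [measurable]: "Z l m \<in> borel_measurable M" using that by (intro Zm) (auto simp: abs_le_iff)
        show ?thesis by measurable
      qed
      then have "(\<lambda>\<omega>. \<Sum>m\<in>{- int l..int l}. w l * (cmod (Z l m \<omega>))\<^sup>2) \<in> borel_measurable M"
        by (rule borel_measurable_sum)
      then show ?thesis by measurable
    qed
    then show ?thesis unfolding HZ_def[abs_def] by (rule borel_measurable_suminf_order)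
  qed
  have pt: "hs_sq s (U \<omega>) \<le> 2 * HDs + 2 * HZ \<omega>" if \<omega>: "\<omega> \<in> space M" for \<omega>
  proof -
    have "hs_sq s (U \<omega>) = (\<Sum>l. \<Sum>m\<in>{- int l..int l}. ennreal (w l * (cmod (U \<omega> l m))\<^sup>2))"
      by (simp add: hs_sq_def w_def)
    also have "\<dots> \<le> (\<Sum>l. 2 * (\<Sum>m\<in>{- int l..int l}. ennreal (w l * (cmod (D l m))\<^sup>2))
                       + 2 * ennreal (\<Sum>m\<in>{- int l..int l}. w l * (cmod (Z l m \<omega>))\<^sup>2))"
    proof (intro suminf_le summableI)
      fix l
      have "(\<Sum>m\<in>{- int l..int l}. ennreal (w l * (cmod (U \<omega> l m))\<^sup>2))
          \<le> (\<Sum>m\<in>{- int l..int l}. 2 * ennreal (w l * (cmod (D l m))\<^sup>2) + 2 * ennreal (w l * (cmod (Z l m \<omega>))\<^sup>2))"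
      proof (intro sum_mono)
        fix m assume "m \<in> {- int l..int l}"
        then have "\<bar>m\<bar> \<le> int l" by auto
        then have "U \<omega> l m = D l m + Z l m \<omega>" by (rule rep[OF \<omega>])
        then have "w l * (cmod (U \<omega> l m))\<^sup>2 \<le> 2 * (w l * (cmod (D l m))\<^sup>2) + 2 * (w l * (cmod (Z l m \<omega>))\<^sup>2)"
          using mult_left_mono[OF cmod_sum_sq[of "D l m" "Z l m \<omega>"] wnn[of l]] by (simp add: algebra_simps)
        then have "ennreal (w l * (cmod (U \<omega> l m))\<^sup>2) \<le> ennreal (2 * (w l * (cmod (D l m))\<^sup>2) + 2 * (w l * (cmod (Z l m \<omega>))\<^sup>2))"
          by (rule ennreal_leI)
        also have "\<dots> = 2 * ennreal (w l * (cmod (D l m))\<^sup>2) + 2 * ennreal (w l * (cmod (Z l m \<omega>))\<^sup>2)"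
          using wnn[of l] by (simp add: ennreal_plus ennreal_mult)
        finally show "ennreal (w l * (cmod (U \<omega> l m))\<^sup>2) \<le> 2 * ennreal (w l * (cmod (D l m))\<^sup>2) + 2 * ennreal (w l * (cmod (Z l m \<omega>))\<^sup>2)" .
      qed
      also have "\<dots> = 2 * (\<Sum>m\<in>{- int l..int l}. ennreal (w l * (cmod (D l m))\<^sup>2))
                       + 2 * ennreal (\<Sum>m\<in>{- int l..int l}. w l * (cmod (Z l m \<omega>))\<^sup>2)"
      proof -
        have s2: "(\<Sum>m\<in>{- int l..int l}. ennreal (w l * (cmod (Z l m \<omega>))\<^sup>2)) = ennreal (\<Sum>m\<in>{- int l..int l}. w l * (cmod (Z l m \<omega>))\<^sup>2)"
          using wnn[of l] by (intro sum_ennreal) auto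
        show ?thesis unfolding sum.distrib sum_distrib_left[symmetric] s2 ..
      qed
      finally show "(\<Sum>m\<in>{- int l..int l}. ennreal (w l * (cmod (U \<omega> l m))\<^sup>2))
          \<le> 2 * (\<Sum>m\<in>{- int l..int l}. ennreal (w l * (cmod (D l m))\<^sup>2))
                       + 2 * ennreal (\<Sum>m\<in>{- int l..int l}. w l * (cmod (Z l m \<omega>))\<^sup>2)" .
    qed
    also have "\<dots> = 2 * HDs + 2 * HZ \<omega>"
      unfolding HDs_def HZ_def by (simp add: suminf_add[symmetric] summableI)
    finally show ?thesis .
  qed
  have HDH: "HDs \<le> ennreal H" using HD by (simp add: HDs_def w_def)
  have "(\<integral>\<^sup>+\<omega>. hs_sq s (U \<omega>) ^ k \<partial>M) \<le> (\<integral>\<^sup>+\<omega>. ennreal (4 ^ k * H ^ k) + ennreal (4 ^ k) * HZ \<omega> ^ k \<partial>M)"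
  proof (intro nn_integral_mono)
    fix \<omega> assume \<omega>: "\<omega> \<in> space M"
    have "hs_sq s (U \<omega>) ^ k \<le> (2 * HDs + 2 * HZ \<omega>) ^ k" by (intro power_mono_ennreal pt \<omega>)
    also have "\<dots> \<le> 2 ^ k * ((2 * HDs) ^ k + (2 * HZ \<omega>) ^ k)" by (rule pow_sum2_enn)
    also have "\<dots> = 4 ^ k * HDs ^ k + 4 ^ k * HZ \<omega> ^ k"
    proof -
      have e: "(2::ennreal) ^ k * 2 ^ k = 4 ^ k" by (simp add: power_mult_distrib[symmetric])
      show ?thesis by (simp add: power_mult_distrib distrib_left mult.assoc[symmetric] e)
    qed
    also have "\<dots> \<le> 4 ^ k * ennreal H ^ k + 4 ^ k * HZ \<omega> ^ k"
      by (intro add_mono mult_left_mono power_mono_ennreal HDH) auto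
    also have "\<dots> = ennreal (4 ^ k * H ^ k) + ennreal (4 ^ k) * HZ \<omega> ^ k"
    proof -
      have e4: "ennreal (4 ^ k) = 4 ^ k" by (simp add: ennreal_power[symmetric])
      show ?thesis using H by (simp add: e4 ennreal_power ennreal_mult)
    qed
    finally show "hs_sq s (U \<omega>) ^ k \<le> ennreal (4 ^ k * H ^ k) + ennreal (4 ^ k) * HZ \<omega> ^ k" .
  qed
  also have "\<dots> = ennreal (4 ^ k * H ^ k) + ennreal (4 ^ k) * (\<integral>\<^sup>+\<omega>. HZ \<omega> ^ k \<partial>M)"
    using HZm by (simp add: nn_integral_add nn_integral_cmult emeasure_space_1)
  also have "\<dots> \<le> ennreal (4 ^ k * H ^ k) + ennreal (4 ^ k) * ennreal B"
    using ZB by (intro add_mono mult_left_mono) (auto simp: HZ_def w_def)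
  also have "\<dots> = ennreal (4 ^ k * (H ^ k + B))"
    using H B by (simp add: ennreal_mult[symmetric] ennreal_plus[symmetric] distrib_left del: ennreal_plus)
  finally show ?thesis using Um by blast
qed

lemma pow_super0:
  assumes a: "0 \<le> (a::real)" and b: "0 \<le> b"
  shows "a ^ Suc k + b ^ Suc k \<le> (a + b) ^ Suc k"
proof (induction k)
  case 0 then show ?case by simp
next
  case (Suc k)
  have "a ^ Suc (Suc k) + b ^ Suc (Suc k) \<le> (a + b) * (a ^ Suc k + b ^ Suc k)"
    using a b by (simp add: algebra_simps)
  also have "\<dots> \<le> (a + b) * (a + b) ^ Suc k"
    using Suc a b by (intro mult_left_mono) auto
  finally show ?case by simp
qed

lemma pow_super: "0 \<le> (a::real) \<Longrightarrow> 0 \<le> b \<Longrightarrow> 1 \<le> k \<Longrightarrow> a ^ k + b ^ k \<le> (a + b) ^ k"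
  using pow_super0[of a b "k - 1"] by simp

lemma final_arith:
  fixes c B N1 N2 H :: real
  assumes c: "0 \<le> c" and B: "0 \<le> B" and N1: "0 \<le> N1" and N2: "0 \<le> N2"
    and H: "0 \<le> H" "H \<le> c * (N1\<^sup>2 + N2\<^sup>2)" and k: "1 \<le> k"
  shows "4 ^ k * (H ^ k + B) \<le> (2 * (1 + c + B) * (1 + N1 + N2)) ^ (2 * k)"
proof -
  define X where "X = (1 + N1 + N2)\<^sup>2"
  have X1: "1 \<le> X" unfolding X_def using N1 N2 by (simp add: one_le_power)
  have XN: "N1\<^sup>2 + N2\<^sup>2 \<le> X" unfolding X_def using N1 N2 by (simp add: power2_eq_square algebra_simps)
  have "H ^ k \<le> (c * X) ^ k" using H c XN by (intro power_mono) (auto intro: order_trans mult_left_mono)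
  also have "\<dots> = c ^ k * X ^ k" by (simp add: power_mult_distrib)
  finally have h1: "H ^ k \<le> c ^ k * X ^ k" .
  have h2: "B \<le> B * X ^ k" using B X1 by (simp add: mult_le_cancel_left1 one_le_power)
  have h3: "c ^ k + B \<le> (1 + c + B) ^ (2 * k)"
  proof -
    have "B \<le> 1 + B" by simp
    also have "\<dots> \<le> (1 + B) ^ k" using B k by (intro self_le_power) auto
    finally have "c ^ k + B \<le> c ^ k + (1 + B) ^ k" by simp
    also have "\<dots> \<le> (c + (1 + B)) ^ k" using c B k by (intro pow_super) auto
    also have "\<dots> \<le> (1 + c + B) ^ (2 * k)" using c B k by (simp add: algebra_simps power_increasing)
    finally show ?thesis .
  qed
  have "4 ^ k * (H ^ k + B) \<le> 4 ^ k * ((c ^ k + B) * X ^ k)"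
    using h1 h2 by (intro mult_left_mono) (auto simp: algebra_simps)
  also have "\<dots> \<le> 4 ^ k * ((1 + c + B) ^ (2 * k) * X ^ k)"
    using h3 X1 by (intro mult_left_mono mult_right_mono) auto
  also have "\<dots> = (2 * (1 + c + B) * (1 + N1 + N2)) ^ (2 * k)"
  proof -
    have e1: "(2 * (1 + c + B) * (1 + N1 + N2)) ^ (2 * k) = 2 ^ (2 * k) * (1 + c + B) ^ (2 * k) * (1 + N1 + N2) ^ (2 * k)"
      by (simp only: power_mult_distrib)
    have e2: "(2::real) ^ (2 * k) = 4 ^ k" by (simp add: power_mult)
    have e3: "X ^ k = (1 + N1 + N2) ^ (2 * k)" unfolding X_def by (simp add: power_mult)
    show ?thesis unfolding e1 e2 e3 by (simp add: mult.assoc)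
  qed
  finally show ?thesis .
qed

lemma hs_sq_fin:
  assumes "hs_sq s f < \<infinity>"
  shows "hs_sq s f = ennreal ((hs_norm s f)\<^sup>2)"
  using assms by (simp add: hs_norm_def)

lemma HD_gen:
  fixes D v1 v2 :: "nat \<Rightarrow> int \<Rightarrow> complex"
  assumes pt: "\<And>l m. m \<in> {- int l..int l} \<Longrightarrow> (1 + lam l) powr s * (cmod (D l m))\<^sup>2
      \<le> a * ((1 + lam l) powr s1 * (cmod (v1 l m))\<^sup>2) + b * ((1 + lam l) powr s2 * (cmod (v2 l m))\<^sup>2)"
    and a: "0 \<le> a" and b: "0 \<le> b" and f1: "hs_sq s1 v1 < \<infinity>" and f2: "hs_sq s2 v2 < \<infinity>"
  shows "(\<Sum>l. \<Sum>m\<in>{- int l..int l}. ennreal ((1 + lam l) powr s * (cmod (D l m))\<^sup>2))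
     \<le> ennreal (a * (hs_norm s1 v1)\<^sup>2 + b * (hs_norm s2 v2)\<^sup>2)"
proof -
  have "(\<Sum>l. \<Sum>m\<in>{- int l..int l}. ennreal ((1 + lam l) powr s * (cmod (D l m))\<^sup>2))
     \<le> (\<Sum>l. ennreal a * (\<Sum>m\<in>{- int l..int l}. ennreal ((1 + lam l) powr s1 * (cmod (v1 l m))\<^sup>2))
            + ennreal b * (\<Sum>m\<in>{- int l..int l}. ennreal ((1 + lam l) powr s2 * (cmod (v2 l m))\<^sup>2)))"
  proof (intro suminf_le summableI)
    fix l
    have "(\<Sum>m\<in>{- int l..int l}. ennreal ((1 + lam l) powr s * (cmod (D l m))\<^sup>2))
      \<le> (\<Sum>m\<in>{- int l..int l}. ennreal a * ennreal ((1 + lam l) powr s1 * (cmod (v1 l m))\<^sup>2)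
            + ennreal b * ennreal ((1 + lam l) powr s2 * (cmod (v2 l m))\<^sup>2))"
    proof (intro sum_mono)
      fix m assume m: "m \<in> {- int l..int l}"
      have "ennreal ((1 + lam l) powr s * (cmod (D l m))\<^sup>2) \<le> ennreal (a * ((1 + lam l) powr s1 * (cmod (v1 l m))\<^sup>2) + b * ((1 + lam l) powr s2 * (cmod (v2 l m))\<^sup>2))"
        by (rule ennreal_leI[OF pt[OF m]])
      also have "\<dots> = ennreal a * ennreal ((1 + lam l) powr s1 * (cmod (v1 l m))\<^sup>2)
            + ennreal b * ennreal ((1 + lam l) powr s2 * (cmod (v2 l m))\<^sup>2)"
        using a b by (simp add: ennreal_plus ennreal_mult)
      finally show "ennreal ((1 + lam l) powr s * (cmod (D l m))\<^sup>2) \<le> ennreal a * ennreal ((1 + lam l) powr s1 * (cmod (v1 l m))\<^sup>2)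
            + ennreal b * ennreal ((1 + lam l) powr s2 * (cmod (v2 l m))\<^sup>2)" .
    qed
    then show "(\<Sum>m\<in>{- int l..int l}. ennreal ((1 + lam l) powr s * (cmod (D l m))\<^sup>2))
     \<le> ennreal a * (\<Sum>m\<in>{- int l..int l}. ennreal ((1 + lam l) powr s1 * (cmod (v1 l m))\<^sup>2))
            + ennreal b * (\<Sum>m\<in>{- int l..int l}. ennreal ((1 + lam l) powr s2 * (cmod (v2 l m))\<^sup>2))"
      unfolding sum.distrib sum_distrib_left .
  qed
  also have "\<dots> = ennreal a * hs_sq s1 v1 + ennreal b * hs_sq s2 v2"
    unfolding hs_sq_def by (simp add: suminf_add[symmetric] summableI)
  also have "\<dots> = ennreal (a * (hs_norm s1 v1)\<^sup>2 + b * (hs_norm s2 v2)\<^sup>2)"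
    using a b by (simp add: hs_sq_fin[OF f1] hs_sq_fin[OF f2] ennreal_plus ennreal_mult)
  finally show ?thesis .
qed

lemma d_sin: "0 < a \<Longrightarrow> ((\<lambda>r. sin ((t - r) * a) / a) has_real_derivative (- cos ((t - r) * a))) (at r)"
  by (auto intro!: derivative_eq_intros)

lemma d_cos: "((\<lambda>r. cos ((t - r) * a)) has_real_derivative (a * sin ((t - r) * a))) (at r)"
  by (auto intro!: derivative_eq_intros)

lemma d_lin: "((\<lambda>r. r - t) has_real_derivative 1) (at r)"
  by (auto intro!: derivative_eq_intros)

lemma d_const: "((\<lambda>r. 1) has_real_derivative 0) (at r)"
  by (auto intro!: derivative_eq_intros)

lemma lam_ge: "1 \<le> l \<Longrightarrow> 2 \<le> lam l"
proof -
  assume "1 \<le> l"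
  then have "1 \<le> real l" by simp
  then have "1 * 2 \<le> real l * (real l + 1)" by (intro mult_mono) auto
  then show ?thesis by (simp add: lam_def)
qed

lemma lam_nn: "0 \<le> lam l" by (simp add: lam_def)

lemma cmod_lin2: "(cmod (complex_of_real p * a + complex_of_real q * b))\<^sup>2 \<le> 2 * p\<^sup>2 * (cmod a)\<^sup>2 + 2 * q\<^sup>2 * (cmod b)\<^sup>2"
  using cmod_sum_sq[of "complex_of_real p * a" "complex_of_real q * b"]
  by (simp add: norm_mult power_mult_distrib)

definition D1 :: "(nat \<Rightarrow> int \<Rightarrow> complex) \<Rightarrow> (nat \<Rightarrow> int \<Rightarrow> complex) \<Rightarrow> real \<Rightarrow> nat \<Rightarrow> int \<Rightarrow> complex" where
  "D1 v1 v2 t l m = (if l = 0 then v1 0 0 + complex_of_real t * v2 0 0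
     else complex_of_real (cos (t * sqrt (lam l))) * v1 l m + complex_of_real (sin (t * sqrt (lam l)) / sqrt (lam l)) * v2 l m)"

definition D2 :: "(nat \<Rightarrow> int \<Rightarrow> complex) \<Rightarrow> (nat \<Rightarrow> int \<Rightarrow> complex) \<Rightarrow> real \<Rightarrow> nat \<Rightarrow> int \<Rightarrow> complex" where
  "D2 v1 v2 t l m = (if l = 0 then v2 0 0
     else complex_of_real (- sqrt (lam l) * sin (t * sqrt (lam l))) * v1 l m + complex_of_real (cos (t * sqrt (lam l))) * v2 l m)"

lemma sin_sq_le1: "(sin (x::real))\<^sup>2 \<le> 1"
  using sin_cos_squared_add[of x] zero_le_power2[of "cos x"] by linarith

lemma powr_split: "0 < L \<Longrightarrow> L powr s = L powr (s - 1) * (L::real)"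
proof -
  assume L: "0 < L"
  have "L powr (s - 1) * L powr 1 = L powr (s - 1 + 1)" by (rule powr_add[symmetric])
  then show ?thesis using L by simp
qed

lemma det_u1:
  assumes t: "0 \<le> t" "t \<le> T" and m: "m \<in> {- int l..int l}"
  shows "(1 + lam l) powr s * (cmod (D1 v1 v2 t l m))\<^sup>2
     \<le> 2 * ((1 + lam l) powr s * (cmod (v1 l m))\<^sup>2) + (4 + 2 * T\<^sup>2) * ((1 + lam l) powr (s - 1) * (cmod (v2 l m))\<^sup>2)"
proof (cases "l = 0")
  case True
  then have m0: "m = 0" using m by auto
  have tt: "t\<^sup>2 \<le> T\<^sup>2" using t by (intro power_mono) auto
  have "(cmod (v1 0 0 + complex_of_real t * v2 0 0))\<^sup>2 \<le> 2 * (cmod (v1 0 0))\<^sup>2 + 2 * (cmod (complex_of_real t * v2 0 0))\<^sup>2"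
    by (rule cmod_sum_sq)
  also have "\<dots> = 2 * (cmod (v1 0 0))\<^sup>2 + 2 * t\<^sup>2 * (cmod (v2 0 0))\<^sup>2" by (simp add: norm_mult power_mult_distrib)
  also have "\<dots> \<le> 2 * (cmod (v1 0 0))\<^sup>2 + (4 + 2 * T\<^sup>2) * (cmod (v2 0 0))\<^sup>2"
    using tt by (intro add_left_mono mult_right_mono) auto
  finally show ?thesis using True m0 by (simp add: D1_def lam_def)
next
  case False
  then have l1: "1 \<le> l" by simp
  define L where "L = 1 + lam l"
  have lg: "2 \<le> lam l" using lam_ge[OF l1] .
  have Lp: "0 < L" using lg by (simp add: L_def)
  define a where "a = sqrt (lam l)"
  have ap: "0 < a" using lg by (simp add: a_def)
  have a2: "a\<^sup>2 = lam l" using lg by (simp add: a_def)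
  have w: "0 \<le> L powr s" by simp
  have "(cmod (D1 v1 v2 t l m))\<^sup>2 \<le> 2 * (cos (t * a))\<^sup>2 * (cmod (v1 l m))\<^sup>2 + 2 * (sin (t * a) / a)\<^sup>2 * (cmod (v2 l m))\<^sup>2"
  proof -
    have "D1 v1 v2 t l m = complex_of_real (cos (t * a)) * v1 l m + complex_of_real (sin (t * a) / a) * v2 l m"
      using False by (simp add: D1_def a_def)
    then show ?thesis by (simp only: cmod_lin2)
  qed
  also have "\<dots> \<le> 2 * (cmod (v1 l m))\<^sup>2 + 2 / lam l * (cmod (v2 l m))\<^sup>2"
  proof (intro add_mono mult_right_mono)
    show "2 * (cos (t * a))\<^sup>2 \<le> 2" using sin_cos_squared_add[of "t * a"] zero_le_power2[of "sin (t * a)"] by linarith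
    have "(sin (t * a) / a)\<^sup>2 = (sin (t * a))\<^sup>2 / lam l" by (simp add: power_divide a2)
    also have "\<dots> \<le> 1 / lam l" using lg by (intro divide_right_mono) (auto simp: sin_sq_le1)
    finally show "2 * (sin (t * a) / a)\<^sup>2 \<le> 2 / lam l" by simp
  qed auto
  finally have c: "(cmod (D1 v1 v2 t l m))\<^sup>2 \<le> 2 * (cmod (v1 l m))\<^sup>2 + 2 / lam l * (cmod (v2 l m))\<^sup>2" .
  have "L powr s * (cmod (D1 v1 v2 t l m))\<^sup>2 \<le> L powr s * (2 * (cmod (v1 l m))\<^sup>2 + 2 / lam l * (cmod (v2 l m))\<^sup>2)"
    using c w by (rule mult_left_mono)
  also have "\<dots> = 2 * (L powr s * (cmod (v1 l m))\<^sup>2) + (2 * (L / lam l)) * (L powr (s - 1) * (cmod (v2 l m))\<^sup>2)"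
    using powr_split[OF Lp, of s] by (simp add: algebra_simps)
  also have "\<dots> \<le> 2 * (L powr s * (cmod (v1 l m))\<^sup>2) + (4 + 2 * T\<^sup>2) * (L powr (s - 1) * (cmod (v2 l m))\<^sup>2)"
  proof (intro add_left_mono mult_right_mono)
    have "L / lam l \<le> 2" using lg by (simp add: L_def divide_le_eq)
    then show "2 * (L / lam l) \<le> 4 + 2 * T\<^sup>2" by (simp add: add_increasing2)
  qed simp
  finally show ?thesis by (simp add: L_def)
qed

lemma det_u2:
  assumes m: "m \<in> {- int l..int l}"
  shows "(1 + lam l) powr s * (cmod (D2 v1 v2 t l m))\<^sup>2
     \<le> 2 * ((1 + lam l) powr (s + 1) * (cmod (v1 l m))\<^sup>2) + 2 * ((1 + lam l) powr s * (cmod (v2 l m))\<^sup>2)"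
proof (cases "l = 0")
  case True
  then have m0: "m = 0" using m by auto
  show ?thesis using True m0 by (simp add: D2_def lam_def)
next
  case False
  then have l1: "1 \<le> l" by simp
  define L where "L = 1 + lam l"
  have lg: "2 \<le> lam l" using lam_ge[OF l1] .
  have Lp: "0 < L" using lg by (simp add: L_def)
  define a where "a = sqrt (lam l)"
  have a2: "a\<^sup>2 = lam l" using lg by (simp add: a_def)
  have w: "0 \<le> L powr s" by simp
  have "(cmod (D2 v1 v2 t l m))\<^sup>2 \<le> 2 * (- a * sin (t * a))\<^sup>2 * (cmod (v1 l m))\<^sup>2 + 2 * (cos (t * a))\<^sup>2 * (cmod (v2 l m))\<^sup>2"
  proof -
    have "D2 v1 v2 t l m = complex_of_real (- a * sin (t * a)) * v1 l m + complex_of_real (cos (t * a)) * v2 l m"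
      using False by (simp add: D2_def a_def)
    then show ?thesis by (simp only: cmod_lin2)
  qed
  also have "\<dots> \<le> 2 * lam l * (cmod (v1 l m))\<^sup>2 + 2 * (cmod (v2 l m))\<^sup>2"
  proof (intro add_mono mult_right_mono)
    show "2 * (cos (t * a))\<^sup>2 \<le> 2" using sin_cos_squared_add[of "t * a"] zero_le_power2[of "sin (t * a)"] by linarith
    have "(- a * sin (t * a))\<^sup>2 = lam l * (sin (t * a))\<^sup>2" by (simp add: power_mult_distrib a2)
    also have "\<dots> \<le> lam l * 1" using lg by (intro mult_left_mono) (auto simp: sin_sq_le1)
    finally show "2 * (- a * sin (t * a))\<^sup>2 \<le> 2 * lam l" by simp
  qed auto
  finally have c: "(cmod (D2 v1 v2 t l m))\<^sup>2 \<le> 2 * lam l * (cmod (v1 l m))\<^sup>2 + 2 * (cmod (v2 l m))\<^sup>2" .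
  have "L powr s * (cmod (D2 v1 v2 t l m))\<^sup>2 \<le> L powr s * (2 * lam l * (cmod (v1 l m))\<^sup>2 + 2 * (cmod (v2 l m))\<^sup>2)"
    using c w by (rule mult_left_mono)
  also have "\<dots> = 2 * ((L powr s * lam l) * (cmod (v1 l m))\<^sup>2) + 2 * (L powr s * (cmod (v2 l m))\<^sup>2)"
    by (simp add: algebra_simps)
  also have "\<dots> \<le> 2 * (L powr (s + 1) * (cmod (v1 l m))\<^sup>2) + 2 * (L powr s * (cmod (v2 l m))\<^sup>2)"
  proof (intro add_right_mono mult_left_mono mult_right_mono)
    have "L powr s * lam l \<le> L powr s * L" using w by (intro mult_left_mono) (auto simp: L_def)
    also have "\<dots> = L powr (s + 1)" using powr_split[OF Lp, of "s + 1"] by simp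
    finally show "L powr s * lam l \<le> L powr (s + 1)" .
  qed auto
  finally show ?thesis by (simp add: L_def)
qed

definition F1 :: "real \<Rightarrow> nat \<Rightarrow> real \<Rightarrow> real" where
  "F1 t l = (if l = 0 then (\<lambda>r. r - t) else (\<lambda>r. sin ((t - r) * sqrt (lam l)) / sqrt (lam l)))"
definition F1' :: "real \<Rightarrow> nat \<Rightarrow> real \<Rightarrow> real" where
  "F1' t l = (if l = 0 then (\<lambda>r. 1) else (\<lambda>r. - cos ((t - r) * sqrt (lam l))))"
definition c1 :: "(nat \<Rightarrow> real) \<Rightarrow> nat \<Rightarrow> int \<Rightarrow> real" where
  "c1 A l m = (if l = 0 then - sqrt (A 0) else cc A l m)"
definition F2 :: "real \<Rightarrow> nat \<Rightarrow> real \<Rightarrow> real" where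
  "F2 t l = (if l = 0 then (\<lambda>r. 1) else (\<lambda>r. cos ((t - r) * sqrt (lam l))))"
definition F2' :: "real \<Rightarrow> nat \<Rightarrow> real \<Rightarrow> real" where
  "F2' t l = (if l = 0 then (\<lambda>r. 0) else (\<lambda>r. sqrt (lam l) * sin ((t - r) * sqrt (lam l))))"

lemma F1d: "(F1 t l has_real_derivative F1' t l r) (at r)"
proof (cases "l = 0")
  case True then show ?thesis by (simp add: F1_def F1'_def d_lin)
next
  case False
  then have "0 < sqrt (lam l)" using lam_ge[of l] by simp
  then show ?thesis using False by (simp add: F1_def F1'_def d_sin)
qed

lemma F2d: "(F2 t l has_real_derivative F2' t l r) (at r)"
  by (cases "l = 0") (simp_all add: F2_def F2'_def d_const d_cos)

lemma F1c: "continuous_on UNIV (F1' t l)"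
  by (cases "l = 0") (auto simp: F1'_def intro!: continuous_intros)

lemma F2c: "continuous_on UNIV (F2' t l)"
  by (cases "l = 0") (auto simp: F2'_def intro!: continuous_intros)

lemma BM_facts:
  assumes nf: "noise_family M T \<beta>" and i: "i \<in> bm_index" and \<omega>: "\<omega> \<in> space M" and tT: "t \<le> T"
  shows "\<beta> i 0 \<omega> = 0" "continuous_on {0..t} (\<lambda>r. \<beta> i r \<omega>)"
proof -
  have "std_BM M T (\<beta> i)" using nf i unfolding noise_family_def by blast
  then have "\<beta> i 0 \<omega> = 0 \<and> continuous_on {0..T} (\<lambda>r. \<beta> i r \<omega>)" using \<omega> unfolding std_BM_def by blast
  then show "\<beta> i 0 \<omega> = 0" "continuous_on {0..t} (\<lambda>r. \<beta> i r \<omega>)"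
    using tT by (auto intro: continuous_on_subset)
qed

lemma det_part:
  fixes \<beta> :: "nat \<times> nat \<times> nat \<Rightarrow> real \<Rightarrow> 'a \<Rightarrow> real"
  assumes nf: "noise_family M T \<beta>" and \<omega>: "\<omega> \<in> space M" and tT: "t \<le> T" and m: "\<bar>m\<bar> \<le> int l"
    and fd: "\<And>r. (f has_real_derivative f' r) (at r)" and f'c: "continuous_on UNIV f'"
  shows "det_stoch_int f (\<lambda>r. noise_coeff A \<beta> l m r \<omega>) t
     = complex_of_real (cc A l m) * Complex (rsi f (\<beta> (1,l,nat \<bar>m\<bar>)) t \<omega>) (ee m * rsi f (\<beta> (2,l,nat \<bar>m\<bar>)) t \<omega>)"
proof -
  have i1: "(1, l, nat \<bar>m\<bar>) \<in> bm_index" using m by (auto simp: bm_index_def)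
  have xc: "continuous_on {0..t} (\<lambda>r. \<beta> (1,l,nat \<bar>m\<bar>) r \<omega>)" using BM_facts[OF nf i1 \<omega> tT] by blast
  have yc: "continuous_on {0..t} (\<lambda>r. ee m * \<beta> (2,l,nat \<bar>m\<bar>) r \<omega>)"
  proof (cases "m = 0")
    case True then show ?thesis by (simp add: ee_def)
  next
    case False
    then have "(2, l, nat \<bar>m\<bar>) \<in> bm_index" using m by (auto simp: bm_index_def)
    then show ?thesis using BM_facts[OF nf _ \<omega> tT] by (intro continuous_on_mult_left) blast
  qed
  have "det_stoch_int f (\<lambda>r. noise_coeff A \<beta> l m r \<omega>) t
      = det_stoch_int f (\<lambda>r. complex_of_real (cc A l m) * Complex (\<beta> (1,l,nat \<bar>m\<bar>) r \<omega>) (ee m * \<beta> (2,l,nat \<bar>m\<bar>) r \<omega>)) t"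
    by (simp only: noise_rep)
  also have "\<dots> = complex_of_real (cc A l m) * Complex (rsi f (\<beta> (1,l,nat \<bar>m\<bar>)) t \<omega>) (rsi f (\<lambda>r \<omega>. ee m * \<beta> (2,l,nat \<bar>m\<bar>) r \<omega>) t \<omega>)"
    unfolding dsi_eq[OF fd f'c xc yc] rsi_def ..
  also have "\<dots> = complex_of_real (cc A l m) * Complex (rsi f (\<beta> (1,l,nat \<bar>m\<bar>)) t \<omega>) (ee m * rsi f (\<beta> (2,l,nat \<bar>m\<bar>)) t \<omega>)"
    by (simp only: rsi_scale)
  finally show ?thesis .
qed

lemma rep_u1:
  fixes \<beta> :: "nat \<times> nat \<times> nat \<Rightarrow> real \<Rightarrow> 'a \<Rightarrow> real"
  assumes nf: "noise_family M T \<beta>" and \<omega>: "\<omega> \<in> space M" and tT: "t \<le> T" and m: "\<bar>m\<bar> \<le> int l"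
  shows "sol_u1 A \<beta> v1 v2 t \<omega> l m = D1 v1 v2 t l m
     + complex_of_real (c1 A l m) * Complex (rsi (F1 t l) (\<beta> (1,l,nat \<bar>m\<bar>)) t \<omega>) (ee m * rsi (F1 t l) (\<beta> (2,l,nat \<bar>m\<bar>)) t \<omega>)"
proof (cases "l = 0")
  case True
  then have m0: "m = 0" using m by auto
  have i1: "(1, 0, 0) \<in> bm_index" by (auto simp: bm_index_def)
  note bf = BM_facts[OF nf i1 \<omega> tT]
  let ?I = "integral {0..t} (\<lambda>r. \<beta> (1,0,0) r \<omega>)"
  have hi: "((\<lambda>r. \<beta> (1,0,0) r \<omega>) has_integral ?I) {0..t}"
    by (intro integrable_integral integrable_continuous_interval bf(2))
  have h1: "((\<lambda>r. complex_of_real (sqrt (A 0) * \<beta> (1,0,0) r \<omega>)) has_integral complex_of_real (sqrt (A 0) * ?I)) {0..t}"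
    by (intro has_integral_of_real has_integral_mult_right hi)
  have eqn: "(\<lambda>r. complex_of_real (sqrt (A 0) * \<beta> (1,0,0) r \<omega>)) = (\<lambda>r. noise_coeff A \<beta> 0 0 r \<omega>)"
    by (simp add: noise_coeff_def)
  have "((\<lambda>r. noise_coeff A \<beta> 0 0 r \<omega>) has_integral complex_of_real (sqrt (A 0) * ?I)) {0..t}"
    using h1 unfolding eqn .
  then have int: "integral {0..t} (\<lambda>r. noise_coeff A \<beta> 0 0 r \<omega>) = complex_of_real (sqrt (A 0) * ?I)"
    by (rule integral_unique)
  have dd: "deriv (\<lambda>r. r - t) = (\<lambda>r. 1)" by (intro ext DERIV_imp_deriv d_lin)
  have rs: "rsi (F1 t 0) (\<beta> (1,0,0)) t \<omega> = - ?I"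
    using bf(1) by (simp add: rsi_def F1_def dd)
  show ?thesis using True m0 rs
    by (simp add: sol_u1_def D1_def int c1_def ee_def complex_of_real_def complex_eq_iff)
next
  case False
  have "sol_u1 A \<beta> v1 v2 t \<omega> l m = D1 v1 v2 t l m + det_stoch_int (F1 t l) (\<lambda>r. noise_coeff A \<beta> l m r \<omega>) t"
    using False m by (simp add: sol_u1_def D1_def F1_def)
  also have "\<dots> = D1 v1 v2 t l m
     + complex_of_real (c1 A l m) * Complex (rsi (F1 t l) (\<beta> (1,l,nat \<bar>m\<bar>)) t \<omega>) (ee m * rsi (F1 t l) (\<beta> (2,l,nat \<bar>m\<bar>)) t \<omega>)"
    using det_part[OF nf \<omega> tT m F1d F1c] False by (simp add: c1_def)
  finally show ?thesis .
qed

lemma rep_u2: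
  fixes \<beta> :: "nat \<times> nat \<times> nat \<Rightarrow> real \<Rightarrow> 'a \<Rightarrow> real"
  assumes nf: "noise_family M T \<beta>" and \<omega>: "\<omega> \<in> space M" and tT: "t \<le> T" and m: "\<bar>m\<bar> \<le> int l"
  shows "sol_u2 A \<beta> v1 v2 t \<omega> l m = D2 v1 v2 t l m
     + complex_of_real (cc A l m) * Complex (rsi (F2 t l) (\<beta> (1,l,nat \<bar>m\<bar>)) t \<omega>) (ee m * rsi (F2 t l) (\<beta> (2,l,nat \<bar>m\<bar>)) t \<omega>)"
proof (cases "l = 0")
  case True
  then have m0: "m = 0" using m by auto
  have i1: "(1, 0, 0) \<in> bm_index" by (auto simp: bm_index_def)
  note bf = BM_facts[OF nf i1 \<omega> tT]
  have dd: "deriv (\<lambda>r::real. 1::real) = (\<lambda>r. 0)" by (intro ext DERIV_imp_deriv d_const)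
  have rs: "rsi (F2 t 0) (\<beta> (1,0,0)) t \<omega> = \<beta> (1,0,0) t \<omega>"
    using bf(1) by (simp add: rsi_def F2_def dd)
  show ?thesis using True m0 rs
    by (simp add: sol_u2_def D2_def cc_def ee_def noise_coeff_def complex_of_real_def complex_eq_iff)
next
  case False
  have "sol_u2 A \<beta> v1 v2 t \<omega> l m = D2 v1 v2 t l m + det_stoch_int (F2 t l) (\<lambda>r. noise_coeff A \<beta> l m r \<omega>) t"
    using False m by (simp add: sol_u2_def D2_def F2_def)
  also have "\<dots> = D2 v1 v2 t l m
     + complex_of_real (cc A l m) * Complex (rsi (F2 t l) (\<beta> (1,l,nat \<bar>m\<bar>)) t \<omega>) (ee m * rsi (F2 t l) (\<beta> (2,l,nat \<bar>m\<bar>)) t \<omega>)"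
    using det_part[OF nf \<omega> tT m F2d F2c] by simp
  finally show ?thesis .
qed

lemma part1:
  fixes M :: "'a measure" and T :: real
    and \<beta> :: "nat \<times> nat \<times> nat \<Rightarrow> real \<Rightarrow> 'a \<Rightarrow> real"
    and A :: "nat \<Rightarrow> real" and l0 :: nat and \<alpha> C :: real
  assumes P: "prob_space M" and T: "0 < T" and nf: "noise_family M T \<beta>"
    and A: "\<forall>l. 0 \<le> A l"
    and \<alpha>: "2 < \<alpha>" and C: "0 < C" and Ab: "\<forall>l>l0. A l \<le> C * real l powr (- \<alpha>)"
  shows
    "\<forall>t\<in>{0..T}. \<forall>k::nat. 1 \<le> k \<longrightarrow> (\<forall>s::real. s < \<alpha> / 2 \<longrightarrow>
       (\<exists>K::real. \<forall>v1 v2. real_sph_coeffs v1 \<and> real_sph_coeffs v2 \<and>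
            hs_sq s v1 < \<infinity> \<and> hs_sq (s - 1) v2 < \<infinity> \<longrightarrow>
          (\<forall>l m. (\<lambda>\<omega>. sol_u1 A \<beta> v1 v2 t \<omega> l m) \<in> borel_measurable M) \<and>
          (\<integral>\<^sup>+\<omega>. hs_sq s (sol_u1 A \<beta> v1 v2 t \<omega>) ^ k \<partial>M)
             \<le> ennreal ((K * (1 + hs_norm s v1 + hs_norm (s - 1) v2)) ^ (2 * k)) \<and>
          (\<integral>\<^sup>+\<omega>. hs_sq s (sol_u1 A \<beta> v1 v2 t \<omega>) ^ k \<partial>M) < \<infinity>))"
proof (intro ballI allI impI)
  fix t :: real and k :: nat and s :: real
  assume t: "t \<in> {0..T}" and k: "1 \<le> k" and s: "s < \<alpha> / 2"
  have t0: "0 \<le> t" and tT: "t \<le> T" using t by auto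
  define w where "w l = (1 + lam l) powr s" for l
  define G1 where "G1 l = (if l = 0 then T else 1 / sqrt (lam l))" for l
  have Gp: "0 < G1 l" for l
  proof (cases "l = 0")
    case False then have "2 \<le> lam l" using lam_ge[of l] by simp
    then show ?thesis using False by (simp add: G1_def)
  qed (simp add: G1_def T)
  have Fb: "\<bar>F1 t l r\<bar> \<le> G1 l" if r: "r \<in> {0..t}" for l r
  proof (cases "l = 0")
    case True then show ?thesis using r tT by (simp add: F1_def G1_def)
  next
    case False
    then have lp: "0 < sqrt (lam l)" using lam_ge[of l] by simp
    have "\<bar>sin ((t - r) * sqrt (lam l)) / sqrt (lam l)\<bar> = \<bar>sin ((t - r) * sqrt (lam l))\<bar> / sqrt (lam l)"
      using lp by (simp add: abs_div)
    also have "\<dots> \<le> 1 / sqrt (lam l)" using lp by (intro divide_right_mono) auto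
    finally show ?thesis using False by (simp add: F1_def G1_def)
  qed
  have cb: "(c1 A l m)\<^sup>2 \<le> A l" for l m
    using A cc_sq[of A l m] by (auto simp: c1_def)
  have wnn: "0 \<le> w l" for l by (simp add: w_def)
  have sb: "summable (\<lambda>l. w l * A l * (2 * real l + 1) * (G1 l)\<^sup>2)"
  proof -
    have "summable (\<lambda>l. (1 + lam l) powr s * A l * ((2 * real l + 1) * (G1 l)\<^sup>2))"
    proof (rule summ_gen[OF Ab A C])
      show "0 \<le> (2 * real l + 1) * (G1 l)\<^sup>2" for l by simp
      show "(2 * real l + 1) * (G1 l)\<^sup>2 \<le> 2 * real l powr (- 1)" if l: "1 \<le> l" for l
      proof -
        have lg: "2 \<le> lam l" using lam_ge[OF l] .
        have lp: "0 < real l" using l by simp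
        have "(2 * real l + 1) * (G1 l)\<^sup>2 = (2 * real l + 1) / lam l"
          using l lg by (simp add: G1_def power_divide)
        also have "\<dots> \<le> 2 / real l"
          using lp lg by (simp add: divide_simps lam_def algebra_simps)
        also have "\<dots> = 2 * real l powr (- 1)" using lp by (simp add: powr_minus divide_inverse)
        finally show ?thesis .
      qed
      show "2 * s + - 1 - \<alpha> < - 1" using s by simp
    qed
    then show ?thesis by (simp add: w_def mult.assoc)
  qed
  have Al: "\<And>l. 0 \<le> A l" using A by blast
  from stoch_bound[where F="F1 t" and F'="F1' t" and G=G1 and c="c1 A" and w=w and AA=A,
      OF P nf t0 tT k F1d F1c Gp Fb cb wnn Al sb]
  obtain B0 where
    Zm: "\<forall>l m. \<bar>m\<bar> \<le> int l \<longrightarrow> (\<lambda>\<omega>. complex_of_real (c1 A l m) * Complex (rsi (F1 t l) (\<beta> (1,l,nat \<bar>m\<bar>)) t \<omega>) (ee m * rsi (F1 t l) (\<beta> (2,l,nat \<bar>m\<bar>)) t \<omega>)) \<in> borel_measurable M"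
    and ZB0: "(\<integral>\<^sup>+\<omega>. (\<Sum>l. ennreal (\<Sum>m\<in>{- int l..int l}. w l * (cmod (complex_of_real (c1 A l m) * Complex (rsi (F1 t l) (\<beta> (1,l,nat \<bar>m\<bar>)) t \<omega>) (ee m * rsi (F1 t l) (\<beta> (2,l,nat \<bar>m\<bar>)) t \<omega>)))\<^sup>2)) ^ k \<partial>M) \<le> ennreal B0"
    by blast
  define B where "B = max B0 0"
  have B: "0 \<le> B" by (simp add: B_def)
  have ZB: "(\<integral>\<^sup>+\<omega>. (\<Sum>l. ennreal (\<Sum>m\<in>{- int l..int l}. (1 + lam l) powr s * (cmod (complex_of_real (c1 A l m) * Complex (rsi (F1 t l) (\<beta> (1,l,nat \<bar>m\<bar>)) t \<omega>) (ee m * rsi (F1 t l) (\<beta> (2,l,nat \<bar>m\<bar>)) t \<omega>)))\<^sup>2)) ^ k \<partial>M) \<le> ennreal B"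
    using ZB0 unfolding w_def B_def by (rule order_trans) (simp add: ennreal_leI)
  define c' where "c' = 6 + 2 * T\<^sup>2"
  show "\<exists>K::real. \<forall>v1 v2. real_sph_coeffs v1 \<and> real_sph_coeffs v2 \<and>
            hs_sq s v1 < \<infinity> \<and> hs_sq (s - 1) v2 < \<infinity> \<longrightarrow>
          (\<forall>l m. (\<lambda>\<omega>. sol_u1 A \<beta> v1 v2 t \<omega> l m) \<in> borel_measurable M) \<and>
          (\<integral>\<^sup>+\<omega>. hs_sq s (sol_u1 A \<beta> v1 v2 t \<omega>) ^ k \<partial>M)
             \<le> ennreal ((K * (1 + hs_norm s v1 + hs_norm (s - 1) v2)) ^ (2 * k)) \<and>
          (\<integral>\<^sup>+\<omega>. hs_sq s (sol_u1 A \<beta> v1 v2 t \<omega>) ^ k \<partial>M) < \<infinity>"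
  proof (intro exI[of _ "2 * (1 + c' + B)"] allI impI)
    fix v1 v2 :: "nat \<Rightarrow> int \<Rightarrow> complex"
    assume vv: "real_sph_coeffs v1 \<and> real_sph_coeffs v2 \<and> hs_sq s v1 < \<infinity> \<and> hs_sq (s - 1) v2 < \<infinity>"
    define N1 where "N1 = hs_norm s v1"
    define N2 where "N2 = hs_norm (s - 1) v2"
    define H where "H = 2 * N1\<^sup>2 + (4 + 2 * T\<^sup>2) * N2\<^sup>2"
    have H0: "0 \<le> H" by (simp add: H_def)
    have HD: "(\<Sum>l. \<Sum>m\<in>{- int l..int l}. ennreal ((1 + lam l) powr s * (cmod (D1 v1 v2 t l m))\<^sup>2)) \<le> ennreal H"
      unfolding H_def N1_def N2_def
      by (rule HD_gen) (use det_u1[OF t0 tT] vv in auto)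
    have asm: "(\<forall>l m. (\<lambda>\<omega>. sol_u1 A \<beta> v1 v2 t \<omega> l m) \<in> borel_measurable M)
      \<and> (\<integral>\<^sup>+\<omega>. hs_sq s (sol_u1 A \<beta> v1 v2 t \<omega>) ^ k \<partial>M) \<le> ennreal (4 ^ k * (H ^ k + B))"
    proof (rule assemble[OF P k, where D="D1 v1 v2 t" and Z="\<lambda>l m \<omega>. complex_of_real (c1 A l m) * Complex (rsi (F1 t l) (\<beta> (1,l,nat \<bar>m\<bar>)) t \<omega>) (ee m * rsi (F1 t l) (\<beta> (2,l,nat \<bar>m\<bar>)) t \<omega>)"])
      show "\<And>\<omega> l m. int l < \<bar>m\<bar> \<Longrightarrow> sol_u1 A \<beta> v1 v2 t \<omega> l m = 0" by (simp add: sol_u1_def)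
      show "\<And>\<omega> l m. \<omega> \<in> space M \<Longrightarrow> \<bar>m\<bar> \<le> int l \<Longrightarrow> sol_u1 A \<beta> v1 v2 t \<omega> l m = D1 v1 v2 t l m +
          complex_of_real (c1 A l m) * Complex (rsi (F1 t l) (\<beta> (1,l,nat \<bar>m\<bar>)) t \<omega>) (ee m * rsi (F1 t l) (\<beta> (2,l,nat \<bar>m\<bar>)) t \<omega>)"
        by (rule rep_u1[OF nf _ tT])
    qed (use Zm ZB B HD H0 in auto)
    have N: "0 \<le> N1" "0 \<le> N2" by (simp_all add: N1_def N2_def hs_norm_def)
    have "4 ^ k * (H ^ k + B) \<le> (2 * (1 + c' + B) * (1 + N1 + N2)) ^ (2 * k)"
    proof (rule final_arith[OF _ B N H0 _ k])
      show "0 \<le> c'" by (simp add: c'_def)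
      show "H \<le> c' * (N1\<^sup>2 + N2\<^sup>2)"
        unfolding H_def c'_def by (simp add: algebra_simps add_mono)
    qed
    then have le: "(\<integral>\<^sup>+\<omega>. hs_sq s (sol_u1 A \<beta> v1 v2 t \<omega>) ^ k \<partial>M)
             \<le> ennreal ((2 * (1 + c' + B) * (1 + hs_norm s v1 + hs_norm (s - 1) v2)) ^ (2 * k))"
      using asm unfolding N1_def N2_def by (meson ennreal_leI order_trans)
    then show "(\<forall>l m. (\<lambda>\<omega>. sol_u1 A \<beta> v1 v2 t \<omega> l m) \<in> borel_measurable M) \<and>
          (\<integral>\<^sup>+\<omega>. hs_sq s (sol_u1 A \<beta> v1 v2 t \<omega>) ^ k \<partial>M)
             \<le> ennreal ((2 * (1 + c' + B) * (1 + hs_norm s v1 + hs_norm (s - 1) v2)) ^ (2 * k)) \<and>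
          (\<integral>\<^sup>+\<omega>. hs_sq s (sol_u1 A \<beta> v1 v2 t \<omega>) ^ k \<partial>M) < \<infinity>"
      using asm by (auto intro: le_less_trans)
  qed
qed

lemma part2:
  fixes M :: "'a measure" and T :: real
    and \<beta> :: "nat \<times> nat \<times> nat \<Rightarrow> real \<Rightarrow> 'a \<Rightarrow> real"
    and A :: "nat \<Rightarrow> real" and l0 :: nat and \<alpha> C :: real
  assumes P: "prob_space M" and T: "0 < T" and nf: "noise_family M T \<beta>"
    and A: "\<forall>l. 0 \<le> A l"
    and \<alpha>: "2 < \<alpha>" and C: "0 < C" and Ab: "\<forall>l>l0. A l \<le> C * real l powr (- \<alpha>)"
  shows
    "\<forall>t\<in>{0..T}. \<forall>k::nat. 1 \<le> k \<longrightarrow> (\<forall>s::real. s < \<alpha> / 2 - 1 \<longrightarrow>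
       (\<exists>K::real. \<forall>v1 v2. real_sph_coeffs v1 \<and> real_sph_coeffs v2 \<and>
            hs_sq (s + 1) v1 < \<infinity> \<and> hs_sq s v2 < \<infinity> \<longrightarrow>
          (\<forall>l m. (\<lambda>\<omega>. sol_u2 A \<beta> v1 v2 t \<omega> l m) \<in> borel_measurable M) \<and>
          (\<integral>\<^sup>+\<omega>. hs_sq s (sol_u2 A \<beta> v1 v2 t \<omega>) ^ k \<partial>M)
             \<le> ennreal ((K * (1 + hs_norm (s + 1) v1 + hs_norm s v2)) ^ (2 * k)) \<and>
          (\<integral>\<^sup>+\<omega>. hs_sq s (sol_u2 A \<beta> v1 v2 t \<omega>) ^ k \<partial>M) < \<infinity>))"
proof (intro ballI allI impI)
  fix t :: real and k :: nat and s :: real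
  assume t: "t \<in> {0..T}" and k: "1 \<le> k" and s: "s < \<alpha> / 2 - 1"
  have t0: "0 \<le> t" and tT: "t \<le> T" using t by auto
  define w where "w l = (1 + lam l) powr s" for l
  define G2 where "G2 l = (1::real)" for l :: nat
  have Gp: "0 < G2 l" for l by (simp add: G2_def)
  have Fb: "\<bar>F2 t l r\<bar> \<le> G2 l" if r: "r \<in> {0..t}" for l r
    by (cases "l = 0") (simp_all add: F2_def G2_def)
  have cb: "(cc A l m)\<^sup>2 \<le> A l" for l m
    using A cc_sq[of A l m] by auto
  have wnn: "0 \<le> w l" for l by (simp add: w_def)
  have sb: "summable (\<lambda>l. w l * A l * (2 * real l + 1) * (G2 l)\<^sup>2)"
  proof -
    have "summable (\<lambda>l. (1 + lam l) powr s * A l * ((2 * real l + 1)))"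
    proof (rule summ_gen[OF Ab A C])
      show "0 \<le> 2 * real l + 1" for l by simp
      show "2 * real l + 1 \<le> 3 * real l powr 1" if l: "1 \<le> l" for l
        using l by simp
      show "2 * s + 1 - \<alpha> < - 1" using s by simp
    qed
    then show ?thesis by (simp add: w_def G2_def mult.assoc)
  qed
  have Al: "\<And>l. 0 \<le> A l" using A by blast
  from stoch_bound[where F="F2 t" and F'="F2' t" and G=G2 and c="cc A" and w=w and AA=A,
      OF P nf t0 tT k F2d F2c Gp Fb cb wnn Al sb]
  obtain B0 where
    Zm: "\<forall>l m. \<bar>m\<bar> \<le> int l \<longrightarrow> (\<lambda>\<omega>. complex_of_real (cc A l m) * Complex (rsi (F2 t l) (\<beta> (1,l,nat \<bar>m\<bar>)) t \<omega>) (ee m * rsi (F2 t l) (\<beta> (2,l,nat \<bar>m\<bar>)) t \<omega>)) \<in> borel_measurable M"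
    and ZB0: "(\<integral>\<^sup>+\<omega>. (\<Sum>l. ennreal (\<Sum>m\<in>{- int l..int l}. w l * (cmod (complex_of_real (cc A l m) * Complex (rsi (F2 t l) (\<beta> (1,l,nat \<bar>m\<bar>)) t \<omega>) (ee m * rsi (F2 t l) (\<beta> (2,l,nat \<bar>m\<bar>)) t \<omega>)))\<^sup>2)) ^ k \<partial>M) \<le> ennreal B0"
    by blast
  define B where "B = max B0 0"
  have B: "0 \<le> B" by (simp add: B_def)
  have ZB: "(\<integral>\<^sup>+\<omega>. (\<Sum>l. ennreal (\<Sum>m\<in>{- int l..int l}. (1 + lam l) powr s * (cmod (complex_of_real (cc A l m) * Complex (rsi (F2 t l) (\<beta> (1,l,nat \<bar>m\<bar>)) t \<omega>) (ee m * rsi (F2 t l) (\<beta> (2,l,nat \<bar>m\<bar>)) t \<omega>)))\<^sup>2)) ^ k \<partial>M) \<le> ennreal B"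
    using ZB0 unfolding w_def B_def by (rule order_trans) (simp add: ennreal_leI)
  define c' where "c' = (2::real)"
  show "\<exists>K::real. \<forall>v1 v2. real_sph_coeffs v1 \<and> real_sph_coeffs v2 \<and>
            hs_sq (s + 1) v1 < \<infinity> \<and> hs_sq s v2 < \<infinity> \<longrightarrow>
          (\<forall>l m. (\<lambda>\<omega>. sol_u2 A \<beta> v1 v2 t \<omega> l m) \<in> borel_measurable M) \<and>
          (\<integral>\<^sup>+\<omega>. hs_sq s (sol_u2 A \<beta> v1 v2 t \<omega>) ^ k \<partial>M)
             \<le> ennreal ((K * (1 + hs_norm (s + 1) v1 + hs_norm s v2)) ^ (2 * k)) \<and>
          (\<integral>\<^sup>+\<omega>. hs_sq s (sol_u2 A \<beta> v1 v2 t \<omega>) ^ k \<partial>M) < \<infinity>"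
  proof (intro exI[of _ "2 * (1 + c' + B)"] allI impI)
    fix v1 v2 :: "nat \<Rightarrow> int \<Rightarrow> complex"
    assume vv: "real_sph_coeffs v1 \<and> real_sph_coeffs v2 \<and> hs_sq (s + 1) v1 < \<infinity> \<and> hs_sq s v2 < \<infinity>"
    define N1 where "N1 = hs_norm (s + 1) v1"
    define N2 where "N2 = hs_norm s v2"
    define H where "H = 2 * N1\<^sup>2 + 2 * N2\<^sup>2"
    have H0: "0 \<le> H" by (simp add: H_def)
    have HD: "(\<Sum>l. \<Sum>m\<in>{- int l..int l}. ennreal ((1 + lam l) powr s * (cmod (D2 v1 v2 t l m))\<^sup>2)) \<le> ennreal H"
      unfolding H_def N1_def N2_def
      by (rule HD_gen) (use det_u2 vv in auto)
    have asm: "(\<forall>l m. (\<lambda>\<omega>. sol_u2 A \<beta> v1 v2 t \<omega> l m) \<in> borel_measurable M)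
      \<and> (\<integral>\<^sup>+\<omega>. hs_sq s (sol_u2 A \<beta> v1 v2 t \<omega>) ^ k \<partial>M) \<le> ennreal (4 ^ k * (H ^ k + B))"
    proof (rule assemble[OF P k, where D="D2 v1 v2 t" and Z="\<lambda>l m \<omega>. complex_of_real (cc A l m) * Complex (rsi (F2 t l) (\<beta> (1,l,nat \<bar>m\<bar>)) t \<omega>) (ee m * rsi (F2 t l) (\<beta> (2,l,nat \<bar>m\<bar>)) t \<omega>)"])
      show "\<And>\<omega> l m. int l < \<bar>m\<bar> \<Longrightarrow> sol_u2 A \<beta> v1 v2 t \<omega> l m = 0" by (simp add: sol_u2_def)
      show "\<And>\<omega> l m. \<omega> \<in> space M \<Longrightarrow> \<bar>m\<bar> \<le> int l \<Longrightarrow> sol_u2 A \<beta> v1 v2 t \<omega> l m = D2 v1 v2 t l m +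
          complex_of_real (cc A l m) * Complex (rsi (F2 t l) (\<beta> (1,l,nat \<bar>m\<bar>)) t \<omega>) (ee m * rsi (F2 t l) (\<beta> (2,l,nat \<bar>m\<bar>)) t \<omega>)"
        by (rule rep_u2[OF nf _ tT])
    qed (use Zm ZB B HD H0 in auto)
    have N: "0 \<le> N1" "0 \<le> N2" by (simp_all add: N1_def N2_def hs_norm_def)
    have "4 ^ k * (H ^ k + B) \<le> (2 * (1 + c' + B) * (1 + N1 + N2)) ^ (2 * k)"
    proof (rule final_arith[OF _ B N H0 _ k])
      show "0 \<le> c'" by (simp add: c'_def)
      show "H \<le> c' * (N1\<^sup>2 + N2\<^sup>2)"
        unfolding H_def c'_def by (simp add: algebra_simps)
    qed
    then have le: "(\<integral>\<^sup>+\<omega>. hs_sq s (sol_u2 A \<beta> v1 v2 t \<omega>) ^ k \<partial>M)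
             \<le> ennreal ((2 * (1 + c' + B) * (1 + hs_norm (s + 1) v1 + hs_norm s v2)) ^ (2 * k))"
      using asm unfolding N1_def N2_def by (meson ennreal_leI order_trans)
    then show "(\<forall>l m. (\<lambda>\<omega>. sol_u2 A \<beta> v1 v2 t \<omega> l m) \<in> borel_measurable M) \<and>
          (\<integral>\<^sup>+\<omega>. hs_sq s (sol_u2 A \<beta> v1 v2 t \<omega>) ^ k \<partial>M)
             \<le> ennreal ((2 * (1 + c' + B) * (1 + hs_norm (s + 1) v1 + hs_norm s v2)) ^ (2 * k)) \<and>
          (\<integral>\<^sup>+\<omega>. hs_sq s (sol_u2 A \<beta> v1 v2 t \<omega>) ^ k \<partial>M) < \<infinity>"
      using asm by (auto intro: le_less_trans)
  qed
qed

theorem proposition3p3: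
  fixes M :: "'a measure" and T :: real
    and \<beta> :: "nat \<times> nat \<times> nat \<Rightarrow> real \<Rightarrow> 'a \<Rightarrow> real"
    and A :: "nat \<Rightarrow> real" and l0 :: nat and \<alpha> C :: real
  assumes "prob_space M" and "0 < T" and "noise_family M T \<beta>"
    and "\<forall>l. 0 \<le> A l"
    and "2 < \<alpha>" and "0 < C" and "\<forall>l>l0. A l \<le> C * real l powr (- \<alpha>)"
  shows
    "(\<forall>t\<in>{0..T}. \<forall>k::nat. 1 \<le> k \<longrightarrow> (\<forall>s::real. s < \<alpha> / 2 \<longrightarrow>
       (\<exists>K::real. \<forall>v1 v2. real_sph_coeffs v1 \<and> real_sph_coeffs v2 \<and>
            hs_sq s v1 < \<infinity> \<and> hs_sq (s - 1) v2 < \<infinity> \<longrightarrow>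
          (\<forall>l m. (\<lambda>\<omega>. sol_u1 A \<beta> v1 v2 t \<omega> l m) \<in> borel_measurable M) \<and>
          (\<integral>\<^sup>+\<omega>. hs_sq s (sol_u1 A \<beta> v1 v2 t \<omega>) ^ k \<partial>M)
             \<le> ennreal ((K * (1 + hs_norm s v1 + hs_norm (s - 1) v2)) ^ (2 * k)) \<and>
          (\<integral>\<^sup>+\<omega>. hs_sq s (sol_u1 A \<beta> v1 v2 t \<omega>) ^ k \<partial>M) < \<infinity>)))
   \<and>
    (\<forall>t\<in>{0..T}. \<forall>k::nat. 1 \<le> k \<longrightarrow> (\<forall>s::real. s < \<alpha> / 2 - 1 \<longrightarrow>
       (\<exists>K::real. \<forall>v1 v2. real_sph_coeffs v1 \<and> real_sph_coeffs v2 \<and>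
            hs_sq (s + 1) v1 < \<infinity> \<and> hs_sq s v2 < \<infinity> \<longrightarrow>
          (\<forall>l m. (\<lambda>\<omega>. sol_u2 A \<beta> v1 v2 t \<omega> l m) \<in> borel_measurable M) \<and>
          (\<integral>\<^sup>+\<omega>. hs_sq s (sol_u2 A \<beta> v1 v2 t \<omega>) ^ k \<partial>M)
             \<le> ennreal ((K * (1 + hs_norm (s + 1) v1 + hs_norm s v2)) ^ (2 * k)) \<and>
          (\<integral>\<^sup>+\<omega>. hs_sq s (sol_u2 A \<beta> v1 v2 t \<omega>) ^ k \<partial>M) < \<infinity>)))"
  using part1[OF assms] part2[OF assms] by blast

end
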